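(* Let $\mathcal M$ be a Hilbert space of $\mathcal Y$-valued functions on the unit ball $\mathbb B^d\subset\mathbb C^d$, and suppose there exist $T_1,\dots,T_d\in\mathcal L(\mathcal M)$ such that for every $f\in\mathcal M$ $$f(\boldsymbol\lambda)-f(0)=\sum_{j=1}^d\lambda_j(T_jf)(\boldsymbol\lambda)\ \ (\boldsymbol\lambda\in\mathbb B^d)\quad\text{and}\quad\sum_{j=1}^d\|T_jf\|^2_{\mathcal M}\le\|f\|^2_{\mathcal M}-\|f(0)\|^2_{\mathcal Y}.$$ Then $\mathcal M$ is isometrically equal to a space $\mathcal H(K^{\mathbf a}_{C,\mathbf A})$ for some contractive pair $(C,\mathbf A)$; consequently $\mathcal M$ is contractively included in the Arveson space $\mathcal H_{\mathcal Y}(k_d)$.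
   Context: For a Hilbert space $\mathcal X$, $C\in\mathcal L(\mathcal X,\mathcal Y)$, $\mathbf A=(A_1,\dots,A_d)\in\mathcal L(\mathcal X)^d$: $(C,\mathbf A)$ is contractive if $C^*C+\sum_jA_j^*A_j\le I$. $\mathcal F_d$: free semigroup of words on $\{1,\dots,d\}$, $\mathbf A^v=A_{i_N}\cdots A_{i_1}$; abelianization $\mathbf a\colon\mathcal F_d\to\mathbb Z^d_+$ counts letter occurrences; $|\mathbf n|=\sum n_k$, $\mathbf n!=\prod n_k!$, $\boldsymbol\lambda^{\mathbf n}=\prod\lambda_k^{n_k}$. Arveson space $\mathcal H_{\mathcal Y}(k_d)$: functions $\sum_{\mathbf n}f_{\mathbf n}\boldsymbol\lambda^{\mathbf n}$ on $\mathbb B^d$ with $\|f\|^2=\sum_{\mathbf n}\frac{\mathbf n!}{|\mathbf n|!}\|f_{\mathbf n}\|^2<\infty$. $\widehat{\mathcal O}^{\mathbf a}_{C,\mathbf A}x=\sum_{\mathbf n}\big(\sum_{v\in\mathbf a^{-1}(\mathbf n)}C\mathbf A^vx\big)\boldsymbol\lambda^{\mathbf n}=C(I-\sum_j\lambda_jA_j)^{-1}x$, $\mathcal G^{\mathbf a}_{C,\mathbf A}=(\widehat{\mathcal O}^{\mathbf a}_{C,\mathbf A})^*\widehat{\mathcal O}^{\mathbf a}_{C,\mathbf A}$, $Q^{\mathbf a}$ the orthogonal projection onto $(\operatorname{Ker}\mathcal G^{\mathbf a}_{C,\mathbf A})^\perp$; $\mathcal H(K^{\mathbf a}_{C,\mathbf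 A})$ is $\operatorname{Ran}\widehat{\mathcal O}^{\mathbf a}_{C,\mathbf A}$ with norm $\|\widehat{\mathcal O}^{\mathbf a}_{C,\mathbf A}x\|=\|Q^{\mathbf a}x\|_{\mathcal X}$ (the reproducing kernel Hilbert space with kernel $C(I-\sum\lambda_jA_j)^{-1}(I-\sum\overline{\zeta_j}A_j^* )^{-1}C^*$). Contractive inclusion: $\mathcal M\subseteq\mathcal H_{\mathcal Y}(k_d)$ and $\|f\|_{\mathcal H_{\mathcal Y}(k_d)}\le\|f\|_{\mathcal M}$. *)

theory Defs
  imports "HOL-Analysis.Analysis" "HOL-Library.Function_Algebras"
begin

class cvector = ab_group_add +
  fixes scaleC :: "complex \<Rightarrow> 'a \<Rightarrow> 'a" (infixr "*\<^sub>C" 75)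
  assumes scaleC_add_right: "a *\<^sub>C (x + y) = a *\<^sub>C x + a *\<^sub>C y"
    and scaleC_add_left: "(a + b) *\<^sub>C x = a *\<^sub>C x + b *\<^sub>C x"
    and scaleC_scaleC: "a *\<^sub>C (b *\<^sub>C x) = (a * b) *\<^sub>C x"
    and scaleC_one: "1 *\<^sub>C x = x"

instantiation "fun" :: (type, cvector) cvector
begin
definition scaleC_fun :: "complex \<Rightarrow> ('a \<Rightarrow> 'b) \<Rightarrow> 'a \<Rightarrow> 'b" where
  "scaleC_fun a f = (\<lambda>z. a *\<^sub>C f z)"
instance
  by standard (simp_all add: scaleC_fun_def fun_eq_iff scaleC_add_right scaleC_add_left
                  scaleC_scaleC scaleC_one)
end

text \<open>Norm induced by an inner product (inner products are linear in the first argument).\<close>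
definition hnorm :: "('a \<Rightarrow> 'a \<Rightarrow> complex) \<Rightarrow> 'a \<Rightarrow> real" where
  "hnorm ip x = sqrt (Re (ip x x))"

definition is_hilbert :: "'a::cvector set \<Rightarrow> ('a \<Rightarrow> 'a \<Rightarrow> complex) \<Rightarrow> bool" where
  "is_hilbert V ip \<longleftrightarrow>
     0 \<in> V \<and> (\<forall>x\<in>V. \<forall>y\<in>V. x + y \<in> V) \<and> (\<forall>a. \<forall>x\<in>V. a *\<^sub>C x \<in> V)
   \<and> (\<forall>x\<in>V. \<forall>y\<in>V. \<forall>z\<in>V. ip (x + y) z = ip x z + ip y z)
   \<and> (\<forall>a. \<forall>x\<in>V. \<forall>y\<in>V. ip (a *\<^sub>C x) y = a * ip x y)
   \<and> (\<forall>x\<in>V. \<forall>y\<in>V. ip x y = cnj (ip y x))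
   \<and> (\<forall>x\<in>V. 0 \<le> Re (ip x x))
   \<and> (\<forall>x\<in>V. ip x x = 0 \<longrightarrow> x = 0)
   \<and> (\<forall>s. (\<forall>n. s n \<in> V) \<and> (\<forall>e>0. \<exists>N. \<forall>m\<ge>N. \<forall>n\<ge>N. hnorm ip (s m - s n) < e)
          \<longrightarrow> (\<exists>l\<in>V. (\<lambda>n. hnorm ip (s n - l)) \<longlonglongrightarrow> 0))"

text \<open>Complex Hilbert spaces as types (used for the coefficient space Y).\<close>
class chilbert = cvector +
  fixes cinner :: "'a \<Rightarrow> 'a \<Rightarrow> complex"
  assumes cinner_add_left: "cinner (x + y) z = cinner x z + cinner y z"
    and cinner_scaleC_left: "cinner (a *\<^sub>C x) y = a * cinner x y"
    and cinner_commute: "cinner x y = cnj (cinner y x)"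
    and cinner_nonneg: "0 \<le> Re (cinner x x)"
    and cinner_eq_zero: "cinner x x = 0 \<Longrightarrow> x = 0"
    and cinner_complete: "(\<forall>e>0. \<exists>N. \<forall>m\<ge>N. \<forall>n\<ge>N. sqrt (Re (cinner (s m - s n) (s m - s n))) < e)
          \<Longrightarrow> (\<exists>l. (\<lambda>n. sqrt (Re (cinner (s n - l) (s n - l)))) \<longlonglongrightarrow> 0)"

definition ynorm :: "'a::chilbert \<Rightarrow> real" where
  "ynorm x = hnorm cinner x"

definition is_blin :: "'a::cvector set \<Rightarrow> ('a \<Rightarrow> 'a \<Rightarrow> complex) \<Rightarrow>
    'b::cvector set \<Rightarrow> ('b \<Rightarrow> 'b \<Rightarrow> complex) \<Rightarrow> ('a \<Rightarrow> 'b) \<Rightarrow> bool" where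
  "is_blin V ipV W ipW T \<longleftrightarrow>
     (\<forall>x\<in>V. T x \<in> W) \<and> (\<forall>x\<in>V. \<forall>y\<in>V. T (x + y) = T x + T y)
   \<and> (\<forall>a. \<forall>x\<in>V. T (a *\<^sub>C x) = a *\<^sub>C T x)
   \<and> (\<exists>K. \<forall>x\<in>V. hnorm ipW (T x) \<le> K * hnorm ipV x)"

text \<open>(C, A) contractive: C*C + sum_j A_j*A_j \<le> I, i.e. for all x,
  <(C*C + sum A_j*A_j) x, x> = |Cx|^2 + sum |A_j x|^2 \<le> |x|^2.\<close>
definition contractive_pair :: "'x::cvector set \<Rightarrow> ('x \<Rightarrow> 'x \<Rightarrow> complex) \<Rightarrow>
    ('x \<Rightarrow> 'y::chilbert) \<Rightarrow> ('d::finite \<Rightarrow> 'x \<Rightarrow> 'x) \<Rightarrow> bool" where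
  "contractive_pair X ipX C A \<longleftrightarrow>
     (\<forall>x\<in>X. (ynorm (C x))\<^sup>2 + (\<Sum>j\<in>UNIV. (hnorm ipX (A j x))\<^sup>2) \<le> (hnorm ipX x)\<^sup>2)"

text \<open>Functions on the unit ball of C^d are represented as functions on complex^'d
  that vanish outside the open unit ball.
  Observability operator: (O x)(lam) = C (I - sum_j lam_j A_j)^{-1} x.\<close>
definition obs :: "'x::cvector set \<Rightarrow> ('x \<Rightarrow> 'y::chilbert) \<Rightarrow> ('d::finite \<Rightarrow> 'x \<Rightarrow> 'x) \<Rightarrow>
    'x \<Rightarrow> (complex^'d \<Rightarrow> 'y)" where
  "obs X C A x = (\<lambda>lam. if norm lam < 1
      then C (THE z. z \<in> X \<and> z - (\<Sum>j\<in>UNIV. (lam $ j) *\<^sub>C A j z) = x) else 0)"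

definition orth_compl :: "'x set \<Rightarrow> ('x \<Rightarrow> 'x \<Rightarrow> complex) \<Rightarrow> 'x set \<Rightarrow> 'x set" where
  "orth_compl X ip S = {y\<in>X. \<forall>s\<in>S. ip y s = 0}"

definition orth_proj :: "('x::cvector \<Rightarrow> 'x \<Rightarrow> complex) \<Rightarrow> 'x set \<Rightarrow> 'x \<Rightarrow> 'x" where
  "orth_proj ip S x = (THE q. q \<in> S \<and> (\<forall>s\<in>S. ip (x - q) s = 0))"

text \<open>Q^a: orthogonal projection onto (Ker G)^perp, where Ker G = Ker O
  (since G = O* O).\<close>
definition Qa :: "'x::cvector set \<Rightarrow> ('x \<Rightarrow> 'x \<Rightarrow> complex) \<Rightarrow> ('x \<Rightarrow> 'y::chilbert) \<Rightarrow>
    ('d::finite \<Rightarrow> 'x \<Rightarrow> 'x) \<Rightarrow> 'x \<Rightarrow> 'x" where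
  "Qa X ipX C A = orth_proj ipX (orth_compl X ipX {x\<in>X. obs X C A x = 0})"

definition mono_pow :: "complex^'d \<Rightarrow> ('d::finite \<Rightarrow> nat) \<Rightarrow> complex" where
  "mono_pow lam n = (\<Prod>j\<in>UNIV. (lam $ j) ^ (n j))"

definition mfact_ratio :: "('d::finite \<Rightarrow> nat) \<Rightarrow> real" where
  "mfact_ratio n = (\<Prod>j\<in>UNIV. fact (n j)) / fact (\<Sum>j\<in>UNIV. n j)"

definition yhas_sum :: "('i \<Rightarrow> 'y::chilbert) \<Rightarrow> 'i set \<Rightarrow> 'y \<Rightarrow> bool" where
  "yhas_sum f S l \<longleftrightarrow> (\<forall>e>0. \<exists>F. finite F \<and> F \<subseteq> S \<and>
      (\<forall>G. finite G \<and> F \<subseteq> G \<and> G \<subseteq> S \<longrightarrow> ynorm (sum f G - l) < e))"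

definition arv_rep :: "(complex^'d::finite \<Rightarrow> 'y::chilbert) \<Rightarrow> (('d \<Rightarrow> nat) \<Rightarrow> 'y) \<Rightarrow> bool" where
  "arv_rep f c \<longleftrightarrow>
     (\<lambda>n. mfact_ratio n * (ynorm (c n))\<^sup>2) summable_on UNIV
   \<and> (\<forall>lam. norm lam < 1 \<longrightarrow> yhas_sum (\<lambda>n. mono_pow lam n *\<^sub>C c n) UNIV (f lam))
   \<and> (\<forall>lam. \<not> norm lam < 1 \<longrightarrow> f lam = 0)"

definition arveson :: "(complex^'d::finite \<Rightarrow> 'y::chilbert) set" where
  "arveson = {f. \<exists>c. arv_rep f c}"

definition arv_norm :: "(complex^'d::finite \<Rightarrow> 'y::chilbert) \<Rightarrow> real" where
  "arv_norm f = sqrt (\<Sum>\<^sub>\<infinity>n. mfact_ratio n * (ynorm ((THE c. arv_rep f c) n))\<^sup>2)"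

end

theory Submission
  imports Defs
begin

lemma scaleC_zero_left[simp]: "(0::complex) *\<^sub>C (x::'a::cvector) = 0"
proof -
  have "0 *\<^sub>C x = 0 *\<^sub>C x + 0 *\<^sub>C x" using scaleC_add_left[of 0 0 x] by simp
  thus ?thesis by simp
qed

lemma scaleC_zero_right[simp]: "a *\<^sub>C (0::'a::cvector) = 0"
proof -
  have "a *\<^sub>C (0::'a) = a *\<^sub>C 0 + a *\<^sub>C 0" using scaleC_add_right[of a 0 0] by simp
  thus ?thesis by simp
qed

lemma scaleC_minus_one: "(-1) *\<^sub>C (x::'a::cvector) = - x"
proof -
  have "x + (-1) *\<^sub>C x = 0" using scaleC_add_left[of 1 "-1" x] by (simp add: scaleC_one)
  thus ?thesis by (simp add: add_eq_0_iff)
qed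

lemma scaleC_minus_right: "a *\<^sub>C (- x::'a::cvector) = - (a *\<^sub>C x)"
  by (metis scaleC_minus_one scaleC_scaleC mult.commute)

lemma scaleC_diff_right: "a *\<^sub>C (x - y::'a::cvector) = a *\<^sub>C x - a *\<^sub>C y"
  by (metis diff_conv_add_uminus scaleC_add_right scaleC_minus_right)

lemma scaleC_sum_right: "a *\<^sub>C (\<Sum>i\<in>A. f i) = (\<Sum>i\<in>A. a *\<^sub>C (f i::'a::cvector))"
  by (induction A rule: infinite_finite_induct) (auto simp: scaleC_add_right)

lemma scaleC_sum_left: "(\<Sum>i\<in>A. f i) *\<^sub>C (x::'a::cvector) = (\<Sum>i\<in>A. f i *\<^sub>C x)"
  by (induction A rule: infinite_finite_induct) (auto simp: scaleC_add_left)

lemma fun_sum_apply: "(\<Sum>i\<in>A. f i) x = (\<Sum>i\<in>A. f i x)"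
  by (induction A rule: infinite_finite_induct) auto

lemma fun_scaleC_apply[simp]: "(a *\<^sub>C f) x = a *\<^sub>C (f x :: 'b::cvector)"
  by (simp add: scaleC_fun_def)

locale hs =
  fixes V :: "'a::cvector set" and ip :: "'a \<Rightarrow> 'a \<Rightarrow> complex"
  assumes hilb: "is_hilbert V ip"
begin

lemma zero_in[simp]: "0 \<in> V" using hilb[unfolded is_hilbert_def, THEN conjunct1] .
lemma add_in[simp]: "x \<in> V \<Longrightarrow> y \<in> V \<Longrightarrow> x + y \<in> V" using hilb[unfolded is_hilbert_def, THEN conjunct2, THEN conjunct1] by blast
lemma scale_in[simp]: "x \<in> V \<Longrightarrow> a *\<^sub>C x \<in> V" using hilb[unfolded is_hilbert_def, THEN conjunct2, THEN conjunct2, THEN conjunct1] by blast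
lemma minus_in[simp]: "x \<in> V \<Longrightarrow> - x \<in> V" using scale_in[of x "-1"] by (simp only: scaleC_minus_one)
lemma diff_in[simp]: "x \<in> V \<Longrightarrow> y \<in> V \<Longrightarrow> x - y \<in> V" by (simp only: diff_conv_add_uminus) (intro add_in minus_in)
lemma sum_in[simp]: "(\<And>i. i \<in> A \<Longrightarrow> f i \<in> V) \<Longrightarrow> (\<Sum>i\<in>A. f i) \<in> V"
  by (induction A rule: infinite_finite_induct) auto

lemma ip_add_left: "x \<in> V \<Longrightarrow> y \<in> V \<Longrightarrow> z \<in> V \<Longrightarrow> ip (x + y) z = ip x z + ip y z"
  using hilb[unfolded is_hilbert_def, THEN conjunct2, THEN conjunct2, THEN conjunct2, THEN conjunct1] by blast
lemma ip_scale_left: "x \<in> V \<Longrightarrow> y \<in> V \<Longrightarrow> ip (a *\<^sub>C x) y = a * ip x y"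
  using hilb[unfolded is_hilbert_def, THEN conjunct2, THEN conjunct2, THEN conjunct2, THEN conjunct2, THEN conjunct1] by blast
lemma ip_commute: "x \<in> V \<Longrightarrow> y \<in> V \<Longrightarrow> ip x y = cnj (ip y x)"
  using hilb[unfolded is_hilbert_def, THEN conjunct2, THEN conjunct2, THEN conjunct2, THEN conjunct2, THEN conjunct2, THEN conjunct1] by blast
lemma ip_nonneg: "x \<in> V \<Longrightarrow> 0 \<le> Re (ip x x)"
  using hilb[unfolded is_hilbert_def, THEN conjunct2, THEN conjunct2, THEN conjunct2, THEN conjunct2, THEN conjunct2, THEN conjunct2, THEN conjunct1] by blast
lemma ip_eq_zero: "x \<in> V \<Longrightarrow> ip x x = 0 \<Longrightarrow> x = 0"
  using hilb[unfolded is_hilbert_def, THEN conjunct2, THEN conjunct2, THEN conjunct2, THEN conjunct2, THEN conjunct2, THEN conjunct2, THEN conjunct2, THEN conjunct1] by blast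
lemma complete: "(\<And>n. s n \<in> V) \<Longrightarrow> (\<And>e. e>0 \<Longrightarrow> \<exists>N. \<forall>m\<ge>N. \<forall>n\<ge>N. hnorm ip (s m - s n) < e)
          \<Longrightarrow> (\<exists>l\<in>V. (\<lambda>n. hnorm ip (s n - l)) \<longlonglongrightarrow> 0)"
proof -
  assume a: "\<And>n. s n \<in> V" and b: "\<And>e. e>0 \<Longrightarrow> \<exists>N. \<forall>m\<ge>N. \<forall>n\<ge>N. hnorm ip (s m - s n) < e"
  have "\<forall>s. (\<forall>n. s n \<in> V) \<and> (\<forall>e>0. \<exists>N. \<forall>m\<ge>N. \<forall>n\<ge>N. hnorm ip (s m - s n) < e)
          \<longrightarrow> (\<exists>l\<in>V. (\<lambda>n. hnorm ip (s n - l)) \<longlonglongrightarrow> 0)"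
    using hilb[unfolded is_hilbert_def, THEN conjunct2, THEN conjunct2, THEN conjunct2, THEN conjunct2, THEN conjunct2, THEN conjunct2, THEN conjunct2, THEN conjunct2] .
  hence "(\<forall>n. s n \<in> V) \<and> (\<forall>e>0. \<exists>N. \<forall>m\<ge>N. \<forall>n\<ge>N. hnorm ip (s m - s n) < e)
          \<longrightarrow> (\<exists>l\<in>V. (\<lambda>n. hnorm ip (s n - l)) \<longlonglongrightarrow> 0)" by (rule spec)
  thus ?thesis using a b by blast
qed

lemma ip_add_right: "x \<in> V \<Longrightarrow> y \<in> V \<Longrightarrow> z \<in> V \<Longrightarrow> ip z (x + y) = ip z x + ip z y"
proof -
  assume a: "x \<in> V" "y \<in> V" "z \<in> V"
  have "ip z (x + y) = cnj (ip (x + y) z)" using a by (intro ip_commute) auto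
  also have "\<dots> = cnj (ip x z) + cnj (ip y z)" using a by (simp add: ip_add_left)
  also have "\<dots> = ip z x + ip z y" using a by (simp add: ip_commute[of z x] ip_commute[of z y])
  finally show ?thesis .
qed
lemma ip_scale_right: "x \<in> V \<Longrightarrow> y \<in> V \<Longrightarrow> ip y (a *\<^sub>C x) = cnj a * ip y x"
proof -
  assume a: "x \<in> V" "y \<in> V"
  have "ip y (a *\<^sub>C x) = cnj (ip (a *\<^sub>C x) y)" using a by (intro ip_commute) auto
  also have "\<dots> = cnj a * cnj (ip x y)" using a by (simp add: ip_scale_left)
  also have "\<dots> = cnj a * ip y x" using a by (simp add: ip_commute[of y x])
  finally show ?thesis .
qed
lemma ip_zero_left[simp]: "y \<in> V \<Longrightarrow> ip 0 y = 0"
  using ip_scale_left[of 0 y 0] by simp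
lemma ip_zero_right[simp]: "y \<in> V \<Longrightarrow> ip y 0 = 0"
  using ip_scale_right[of 0 y 0] by simp
lemma ip_minus_left: "x \<in> V \<Longrightarrow> y \<in> V \<Longrightarrow> ip (- x) y = - ip x y"
  using ip_scale_left[of x y "-1"] by (simp add: scaleC_minus_one)
lemma ip_minus_right: "x \<in> V \<Longrightarrow> y \<in> V \<Longrightarrow> ip y (- x) = - ip y x"
  using ip_scale_right[of x y "-1"] by (simp add: scaleC_minus_one)
lemma ip_diff_left: "x \<in> V \<Longrightarrow> y \<in> V \<Longrightarrow> z \<in> V \<Longrightarrow> ip (x - y) z = ip x z - ip y z"
  using ip_add_left[of x "-y" z] ip_minus_left[of y z] by (simp del: add_uminus_conv_diff add: diff_conv_add_uminus)
lemma ip_diff_right: "x \<in> V \<Longrightarrow> y \<in> V \<Longrightarrow> z \<in> V \<Longrightarrow> ip z (x - y) = ip z x - ip z y"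
  using ip_add_right[of x "-y" z] ip_minus_right[of y z] by (simp del: add_uminus_conv_diff add: diff_conv_add_uminus)
lemma ip_sum_left: "(\<And>i. i \<in> A \<Longrightarrow> f i \<in> V) \<Longrightarrow> y \<in> V \<Longrightarrow> ip (\<Sum>i\<in>A. f i) y = (\<Sum>i\<in>A. ip (f i) y)"
  by (induction A rule: infinite_finite_induct) (auto simp: ip_add_left)

lemma ip_self_real: "x \<in> V \<Longrightarrow> ip x x = complex_of_real (Re (ip x x))"
proof -
  assume x: "x \<in> V"
  have e: "cnj (ip x x) = ip x x" using ip_commute[OF x x] by (rule sym)
  have "ip x x \<in> \<real>" using e Reals_cnj_iff by blast
  thus ?thesis by (rule of_real_Re[symmetric])
qed

lemma hnorm_nonneg[simp]: "x \<in> V \<Longrightarrow> 0 \<le> hnorm ip x" using ip_nonneg[of x] by (simp add: hnorm_def)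
lemma hnorm_sq: "x \<in> V \<Longrightarrow> (hnorm ip x)^2 = Re (ip x x)"
  using ip_nonneg[of x] by (simp add: hnorm_def)
lemma hnorm_zero[simp]: "hnorm ip 0 = 0" by (simp add: hnorm_def)
lemma hnorm_eq_zero: "x \<in> V \<Longrightarrow> hnorm ip x = 0 \<Longrightarrow> x = 0"
proof -
  assume x: "x \<in> V" and h: "hnorm ip x = 0"
  have "Re (ip x x) = 0" using hnorm_sq[OF x] h by simp
  hence "ip x x = 0" using ip_self_real[OF x] by simp
  thus "x = 0" using ip_eq_zero[OF x] by blast
qed
lemma hnorm_scale: "x \<in> V \<Longrightarrow> hnorm ip (a *\<^sub>C x) = cmod a * hnorm ip x"
proof -
  assume x: "x \<in> V"
  have "ip (a *\<^sub>C x) (a *\<^sub>C x) = (a * cnj a) * ip x x"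
    using x by (simp add: ip_scale_left ip_scale_right)
  also have "a * cnj a = complex_of_real ((cmod a)^2)" by (rule complex_norm_square[symmetric])
  finally have "Re (ip (a *\<^sub>C x) (a *\<^sub>C x)) = (cmod a)^2 * Re (ip x x)"
    by simp
  thus ?thesis by (simp add: hnorm_def real_sqrt_mult)
qed
lemma hnorm_minus: "x \<in> V \<Longrightarrow> hnorm ip (- x) = hnorm ip x"
  using hnorm_scale[of x "-1"] by (simp add: scaleC_minus_one)
lemma hnorm_diff_commute: "x \<in> V \<Longrightarrow> y \<in> V \<Longrightarrow> hnorm ip (x - y) = hnorm ip (y - x)"
  using hnorm_minus[of "x - y"] by simp

lemma cauchy_schwarz: assumes x: "x \<in> V" and y: "y \<in> V"
  shows "cmod (ip x y) \<le> hnorm ip x * hnorm ip y"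
proof (cases "y = 0")
  case True thus ?thesis using x by simp
next
  case False
  define r where "r = Re (ip y y)"
  have r0: "r > 0" using False y ip_nonneg[OF y] ip_eq_zero[OF y] ip_self_real[OF y] r_def
    by (metis less_eq_real_def of_real_0)
  have yy: "ip y y = complex_of_real r" using ip_self_real[OF y] r_def by simp
  define t where "t = ip x y / complex_of_real r"
  have nn: "ip x y * cnj (ip x y) = complex_of_real ((cmod (ip x y))^2)" by (rule complex_norm_square[symmetric])
  have nn': "cnj (ip x y) * ip x y = complex_of_real ((cmod (ip x y))^2)" using nn by (simp add: mult.commute)
  have "0 \<le> Re (ip (x - t *\<^sub>C y) (x - t *\<^sub>C y))" using x y by (simp add: ip_nonneg)
  also have "ip (x - t *\<^sub>C y) (x - t *\<^sub>C y) = ip x x - cnj t * ip x y - t * ip y x + t * cnj t * ip y y"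
    using x y by (simp add: ip_diff_left ip_diff_right ip_scale_left ip_scale_right algebra_simps)
  also have "ip y x = cnj (ip x y)" using x y ip_commute by blast
  also have "t * cnj t * ip y y = complex_of_real ((cmod (ip x y))^2 / r)"
    using r0 unfolding t_def yy by (simp add: nn nn' field_simps)
  also have "cnj t * ip x y = complex_of_real ((cmod (ip x y))^2 / r)"
    using r0 unfolding t_def by (simp add: nn nn' field_simps mult.commute)
  also have "t * cnj (ip x y) = complex_of_real ((cmod (ip x y))^2 / r)"
    using r0 unfolding t_def by (simp add: nn nn' field_simps)
  finally have "(cmod (ip x y))^2 / r \<le> Re (ip x x)" by simp
  hence "(cmod (ip x y))^2 \<le> Re (ip x x) * r" using r0 by (simp add: field_simps)
  also have "\<dots> = (hnorm ip x * hnorm ip y)^2" using x y by (simp add: power_mult_distrib hnorm_sq r_def)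
  finally show ?thesis by (rule power2_le_imp_le) (simp add: x y)
qed

lemma hnorm_triangle: assumes x: "x \<in> V" and y: "y \<in> V"
  shows "hnorm ip (x + y) \<le> hnorm ip x + hnorm ip y"
proof -
  have "ip (x + y) (x + y) = ip x x + ip y y + (ip x y + cnj (ip x y))"
    using x y by (simp add: ip_add_left ip_add_right ip_commute[of y x])
  hence "(hnorm ip (x + y))^2 = (hnorm ip x)^2 + (hnorm ip y)^2 + 2 * Re (ip x y)"
    using x y by (simp add: hnorm_sq)
  also have "Re (ip x y) \<le> hnorm ip x * hnorm ip y"
    using cauchy_schwarz[OF x y] complex_Re_le_cmod order_trans by blast
  finally have "(hnorm ip (x + y))^2 \<le> (hnorm ip x + hnorm ip y)^2" by (simp add: power2_sum)
  thus ?thesis by (rule power2_le_imp_le) (simp add: x y)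
qed

lemma hnorm_triangle_diff: "x \<in> V \<Longrightarrow> y \<in> V \<Longrightarrow> hnorm ip (x - y) \<le> hnorm ip x + hnorm ip y"
  by (metis diff_conv_add_uminus hnorm_triangle minus_in hnorm_minus)

lemma hnorm_sum: "(\<And>i. i \<in> A \<Longrightarrow> f i \<in> V) \<Longrightarrow> hnorm ip (\<Sum>i\<in>A. f i) \<le> (\<Sum>i\<in>A. hnorm ip (f i))"
proof (induction A rule: infinite_finite_induct)
  case (insert a A)
  hence "hnorm ip (f a + sum f A) \<le> hnorm ip (f a) + hnorm ip (sum f A)"
    by (intro hnorm_triangle) auto
  with insert show ?case by auto
qed auto

end

lemma hs_Y: "hs (UNIV::'y::chilbert set) cinner"
  unfolding hs_def is_hilbert_def
  using cinner_add_left cinner_scaleC_left cinner_commute cinner_nonneg cinner_eq_zero cinner_complete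
  by (auto simp: hnorm_def) blast


lemma geom_sum_le: assumes "0 \<le> (q::real)" "q < 1"
  shows "(\<Sum>i=n..<m. q^i) \<le> q^n / (1 - q)"
proof -
  have eq: "n \<le> m \<Longrightarrow> (1 - q) * (\<Sum>i=n..<m. q^i) = q^n - q^m" for m
  proof (induction m)
    case 0 thus ?case by simp
  next
    case (Suc m)
    show ?case
    proof (cases "n \<le> m")
      case True
      hence "(1 - q) * (\<Sum>i=n..<Suc m. q^i) = (1 - q) * (\<Sum>i=n..<m. q^i) + (1 - q) * q^m"
        by (simp add: algebra_simps)
      also have "\<dots> = q^n - q^Suc m" using Suc True by (simp add: algebra_simps)
      finally show ?thesis .
    next
      case False
      hence "n = Suc m" using Suc by simp
      thus ?thesis by simp
    qed
  qed
  show ?thesis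
  proof (cases "n \<le> m")
    case True
    have "(1 - q) * (\<Sum>i=n..<m. q^i) \<le> q^n" using eq[OF True] assms by simp
    thus ?thesis using assms by (simp add: field_simps)
  next
    case False thus ?thesis using assms by simp
  qed
qed

context hs begin

lemma solve:
  assumes S_in: "\<And>x. x \<in> V \<Longrightarrow> S x \<in> V"
    and S_add: "\<And>x y. x \<in> V \<Longrightarrow> y \<in> V \<Longrightarrow> S (x + y) = S x + S y"
    and S_bd: "\<And>x. x \<in> V \<Longrightarrow> hnorm ip (S x) \<le> q * hnorm ip x"
    and q: "0 \<le> q" "q < 1" and h: "h \<in> V"
  shows "\<exists>!z. z \<in> V \<and> z - S z = h"
    and "\<And>z. z \<in> V \<Longrightarrow> z - S z = h \<Longrightarrow> hnorm ip z \<le> hnorm ip h / (1 - q)"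
proof -
  have S_diff: "S (x - y) = S x - S y" if "x \<in> V" "y \<in> V" for x y
  proof -
    have "S x = S ((x - y) + y)" by simp
    also have "\<dots> = S (x - y) + S y" using that by (intro S_add) auto
    finally show ?thesis by (simp add: algebra_simps)
  qed
  have S0: "S 0 = 0" using S_add[of 0 0] by simp
  have bnd: "hnorm ip z \<le> hnorm ip h / (1 - q)" if z: "z \<in> V" "z - S z = h" for z
  proof -
    have "z = h + S z" using z by (simp add: algebra_simps)
    hence "hnorm ip z \<le> hnorm ip h + hnorm ip (S z)" using hnorm_triangle[OF h S_in[OF z(1)]] by simp
    also have "\<dots> \<le> hnorm ip h + q * hnorm ip z" using S_bd[OF z(1)] by simp
    finally have "(1 - q) * hnorm ip z \<le> hnorm ip h" by (simp add: algebra_simps)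
    thus ?thesis using q by (simp add: field_simps)
  qed
  thus "\<And>z. z \<in> V \<Longrightarrow> z - S z = h \<Longrightarrow> hnorm ip z \<le> hnorm ip h / (1 - q)" by blast
  have uniq: "z1 = z2" if "z1 \<in> V" "z1 - S z1 = h" "z2 \<in> V" "z2 - S z2 = h" for z1 z2
  proof -
    define w where "w = z1 - z2"
    have w: "w \<in> V" using that w_def by simp
    have "w - S w = (z1 - S z1) - (z2 - S z2)" using S_diff[OF that(1) that(3)] unfolding w_def
      by (simp add: algebra_simps)
    hence "w - S w = 0" by (simp only: that(2) that(4)) simp
    hence "w = S w" by simp
    hence "hnorm ip w \<le> q * hnorm ip w" using S_bd[OF w] by simp
    hence "hnorm ip w = 0" using q hnorm_nonneg[OF w]
      by (metis mult_le_cancel_right1 not_le order_antisym)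
    thus ?thesis using hnorm_eq_zero[OF w] w_def by simp
  qed
  define z where "z = rec_nat 0 (\<lambda>_ y. h + S y)"
  have z0: "z 0 = 0" and zS: "z (Suc n) = h + S (z n)" for n by (simp_all add: z_def)
  have zV: "z n \<in> V" for n by (induction n) (simp_all add: z0 zS h S_in)
  have dn: "hnorm ip (z (Suc n) - z n) \<le> q^n * hnorm ip h" for n
  proof (induction n)
    case 0 thus ?case by (simp add: z0 zS S0)
  next
    case (Suc n)
    have "z (Suc (Suc n)) - z (Suc n) = (h + S (z (Suc n))) - (h + S (z n))"
      using zS[of "Suc n"] zS[of n] by simp
    also have "\<dots> = S (z (Suc n)) - S (z n)" by simp
    also have "\<dots> = S (z (Suc n) - z n)" by (rule S_diff[symmetric]) (rule zV)+
    finally have "z (Suc (Suc n)) - z (Suc n) = S (z (Suc n) - z n)" .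
    hence "hnorm ip (z (Suc (Suc n)) - z (Suc n)) \<le> q * hnorm ip (z (Suc n) - z n)"
      using S_bd[of "z (Suc n) - z n"] zV by simp
    also have "\<dots> \<le> q * (q^n * hnorm ip h)" using Suc q by (simp add: mult_left_mono)
    finally show ?case by simp
  qed
  have dmn: "hnorm ip (z m - z n) \<le> q^n * hnorm ip h / (1 - q)" if "n \<le> m" for m n
  proof -
    have "z m - z n = (\<Sum>i=n..<m. z (Suc i) - z i)" using that
      by (simp add: sum_Suc_diff')
    hence "hnorm ip (z m - z n) \<le> (\<Sum>i=n..<m. hnorm ip (z (Suc i) - z i))"
      using hnorm_sum[of "{n..<m}" "\<lambda>i. z (Suc i) - z i"] zV by simp
    also have "\<dots> \<le> (\<Sum>i=n..<m. q^i * hnorm ip h)" by (intro sum_mono dn)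
    also have "\<dots> = (\<Sum>i=n..<m. q^i) * hnorm ip h" by (simp add: sum_distrib_right)
    also have "\<dots> \<le> q^n / (1 - q) * hnorm ip h"
      by (intro mult_right_mono geom_sum_le q) (simp add: h)
    finally show ?thesis by simp
  qed
  have lim0: "(\<lambda>n. q^n * hnorm ip h / (1 - q)) \<longlonglongrightarrow> 0"
    using q by (intro tendsto_divide_zero tendsto_mult_left_zero LIMSEQ_power_zero) auto
  have cauchy: "\<exists>N. \<forall>m\<ge>N. \<forall>n\<ge>N. hnorm ip (z m - z n) < e" if e: "e > 0" for e
  proof -
    obtain N where N: "\<And>n. n \<ge> N \<Longrightarrow> q^n * hnorm ip h / (1 - q) < e"
      using lim0 e by (metis (no_types, lifting) order_tendstoD(2) eventually_sequentially)
    have "hnorm ip (z m - z n) < e" if "m \<ge> N" "n \<ge> N" for m n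
    proof (cases "n \<le> m")
      case True thus ?thesis using dmn[OF True] N[OF that(2)] by linarith
    next
      case False
      hence "hnorm ip (z m - z n) = hnorm ip (z n - z m)" using hnorm_diff_commute zV by blast
      thus ?thesis using dmn[of m n] False N[OF that(1)] by simp
    qed
    thus ?thesis by blast
  qed
  obtain l where l: "l \<in> V" "(\<lambda>n. hnorm ip (z n - l)) \<longlonglongrightarrow> 0"
    using complete[of z, OF zV cauchy] by blast
  define w where "w = l - S l - h"
  have w: "w \<in> V" using l h S_in w_def by simp
  have "hnorm ip w \<le> hnorm ip (z (Suc n) - l) + q * hnorm ip (z n - l)" for n
  proof -
    have "w = (l - z (Suc n)) + S (z n - l)" using S_diff[OF zV l(1)] unfolding w_def zS
      by (simp add: algebra_simps)
    hence "hnorm ip w \<le> hnorm ip (l - z (Suc n)) + hnorm ip (S (z n - l))"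
      using hnorm_triangle[of "l - z (Suc n)" "S (z n - l)"] zV l S_in by simp
    also have "hnorm ip (l - z (Suc n)) = hnorm ip (z (Suc n) - l)" using hnorm_diff_commute zV l by blast
    also have "hnorm ip (S (z n - l)) \<le> q * hnorm ip (z n - l)" using S_bd zV l by simp
    finally show ?thesis by simp
  qed
  moreover have "(\<lambda>n. hnorm ip (z (Suc n) - l) + q * hnorm ip (z n - l)) \<longlonglongrightarrow> 0"
    using l(2) LIMSEQ_Suc[OF l(2)] by (intro tendsto_add_zero tendsto_mult_right_zero) simp_all
  ultimately have "hnorm ip w \<le> 0" by (intro LIMSEQ_le_const) auto
  hence "w = 0" using hnorm_eq_zero[OF w] hnorm_nonneg[OF w] by simp
  hence "l \<in> V \<and> l - S l = h" using l w_def by simp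
  thus "\<exists>!z. z \<in> V \<and> z - S z = h" using uniq by blast
qed

end

lemma ynorm_nonneg[simp]: "0 \<le> ynorm (y::'y::chilbert)"
  unfolding ynorm_def using hs.hnorm_nonneg[OF hs_Y] by simp

locale setting = hs M ipM for M :: "(complex^'d::finite \<Rightarrow> 'y::chilbert) set" and ipM +
  fixes T :: "'d \<Rightarrow> (complex^'d \<Rightarrow> 'y) \<Rightarrow> (complex^'d \<Rightarrow> 'y)"
  assumes on_ball: "\<forall>f\<in>M. \<forall>lam. \<not> norm lam < 1 \<longrightarrow> f lam = 0"
    and T_bdd: "\<forall>j. is_blin M ipM M ipM (T j)"
    and T_shift: "\<forall>f\<in>M. \<forall>lam. norm lam < 1 \<longrightarrow>
                    f lam - f 0 = (\<Sum>j\<in>UNIV. (lam $ j) *\<^sub>C (T j f) lam)"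
    and T_contr: "\<forall>f\<in>M. (\<Sum>j\<in>UNIV. (hnorm ipM (T j f))\<^sup>2) \<le> (hnorm ipM f)\<^sup>2 - (ynorm (f 0))\<^sup>2"
begin

lemma T_in[simp]: "f \<in> M \<Longrightarrow> T j f \<in> M"
  using T_bdd unfolding is_blin_def by blast
lemma T_add: "f \<in> M \<Longrightarrow> g \<in> M \<Longrightarrow> T j (f + g) = T j f + T j g"
  using T_bdd unfolding is_blin_def by blast
lemma T_scale: "f \<in> M \<Longrightarrow> T j (a *\<^sub>C f) = a *\<^sub>C T j f"
  using T_bdd unfolding is_blin_def by blast
lemma T_zero[simp]: "T j 0 = 0"
  using T_add[of 0 0 j] by simp
lemma T_sum: "(\<And>i. i \<in> A \<Longrightarrow> g i \<in> M) \<Longrightarrow> T j (\<Sum>i\<in>A. g i) = (\<Sum>i\<in>A. T j (g i))"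
  by (induction A rule: infinite_finite_induct) (auto simp: T_add)

lemma contr: "f \<in> M \<Longrightarrow> (ynorm (f 0))\<^sup>2 + (\<Sum>j\<in>UNIV. (hnorm ipM (T j f))\<^sup>2) \<le> (hnorm ipM f)\<^sup>2"
  using T_contr by force

lemma f0_bound: "f \<in> M \<Longrightarrow> ynorm (f 0) \<le> hnorm ipM f"
proof -
  assume f: "f \<in> M"
  have "(ynorm (f 0))\<^sup>2 \<le> (hnorm ipM f)\<^sup>2"
    using contr[OF f] sum_nonneg[of UNIV "\<lambda>j. (hnorm ipM (T j f))\<^sup>2"] by simp
  thus ?thesis by (rule power2_le_imp_le) (simp add: f)
qed

definition Sop :: "complex^'d \<Rightarrow> (complex^'d \<Rightarrow> 'y) \<Rightarrow> (complex^'d \<Rightarrow> 'y)" where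
  "Sop lam h = (\<Sum>j\<in>UNIV. (lam $ j) *\<^sub>C T j h)"

lemma S_in[simp]: "h \<in> M \<Longrightarrow> Sop lam h \<in> M"
  unfolding Sop_def by (intro sum_in scale_in T_in)

lemma S_add: "f \<in> M \<Longrightarrow> g \<in> M \<Longrightarrow> Sop lam (f + g) = Sop lam f + Sop lam g"
  unfolding Sop_def by (simp add: T_add scaleC_add_right sum.distrib)

lemma norm_vec_sq: "(norm (lam::complex^'d))\<^sup>2 = (\<Sum>j\<in>UNIV. (cmod (lam $ j))\<^sup>2)"
  unfolding norm_vec_def L2_set_def by (simp add: sum_nonneg)

lemma S_bd: assumes h: "h \<in> M" shows "hnorm ipM (Sop lam h) \<le> norm lam * hnorm ipM h"
proof -
  have "hnorm ipM (Sop lam h) \<le> (\<Sum>j\<in>UNIV. hnorm ipM ((lam $ j) *\<^sub>C T j h))"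
    unfolding Sop_def using h by (intro hnorm_sum) simp
  also have "\<dots> = (\<Sum>j\<in>UNIV. cmod (lam $ j) * hnorm ipM (T j h))"
    using h by (simp add: hnorm_scale)
  also have "\<dots> \<le> sqrt (\<Sum>j\<in>UNIV. (cmod (lam $ j))\<^sup>2) * sqrt (\<Sum>j\<in>UNIV. (hnorm ipM (T j h))\<^sup>2)"
  proof (rule power2_le_imp_le)
    show "(\<Sum>j\<in>UNIV. cmod (lam $ j) * hnorm ipM (T j h))\<^sup>2 \<le> (sqrt (\<Sum>j\<in>UNIV. (cmod (lam $ j))\<^sup>2) * sqrt (\<Sum>j\<in>UNIV. (hnorm ipM (T j h))\<^sup>2))\<^sup>2"
      using Cauchy_Schwarz_ineq_sum[of "\<lambda>j. cmod (lam $ j)" "\<lambda>j. hnorm ipM (T j h)" UNIV]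
      by (simp add: power_mult_distrib sum_nonneg)
  qed (simp add: sum_nonneg)
  also have "sqrt (\<Sum>j\<in>UNIV. (cmod (lam $ j))\<^sup>2) = norm lam"
    using norm_vec_sq[of lam] by (metis norm_ge_zero real_sqrt_abs abs_of_nonneg)
  also have "sqrt (\<Sum>j\<in>UNIV. (hnorm ipM (T j h))\<^sup>2) \<le> hnorm ipM h"
  proof -
    have "(\<Sum>j\<in>UNIV. (hnorm ipM (T j h))\<^sup>2) \<le> (hnorm ipM h)\<^sup>2" using contr[OF h] zero_le_power2[of "ynorm (h 0)"] by linarith
    thus ?thesis using h by (simp add: real_sqrt_le_iff real_le_lsqrt sum_nonneg)
  qed
  finally show ?thesis by (simp add: mult_left_mono)
qed

lemma shift: "h \<in> M \<Longrightarrow> norm lam < 1 \<Longrightarrow> h lam = h 0 + Sop lam h lam"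
  using T_shift unfolding Sop_def by (force simp: fun_sum_apply algebra_simps)

lemma solve_S: assumes h: "h \<in> M" and lam: "norm lam < 1"
  shows "\<exists>!z. z \<in> M \<and> z - Sop lam z = h"
    and "\<And>z. z \<in> M \<Longrightarrow> z - Sop lam z = h \<Longrightarrow> z 0 = h lam \<and> hnorm ipM z \<le> hnorm ipM h / (1 - norm lam)"
proof -
  show "\<exists>!z. z \<in> M \<and> z - Sop lam z = h"
    by (rule solve(1)[OF S_in S_add S_bd _ lam h]) simp_all
  fix z assume z: "z \<in> M" "z - Sop lam z = h"
  have "hnorm ipM z \<le> hnorm ipM h / (1 - norm lam)"
    by (rule solve(2)[OF S_in S_add S_bd _ lam h]) (simp_all add: z)
  moreover have "z 0 = h lam"
  proof -
    have "h lam = z lam - Sop lam z lam" using z(2) by auto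
    also have "z lam = z 0 + Sop lam z lam" using shift[OF z(1) lam] .
    finally show ?thesis by simp
  qed
  ultimately show "z 0 = h lam \<and> hnorm ipM z \<le> hnorm ipM h / (1 - norm lam)" by simp
qed

lemma eval_bound: assumes h: "h \<in> M" and lam: "norm lam < 1"
  shows "ynorm (h lam) \<le> hnorm ipM h / (1 - norm lam)"
proof -
  obtain z where z: "z \<in> M" "z - Sop lam z = h" using solve_S(1)[OF h lam] by blast
  have "ynorm (h lam) = ynorm (z 0)" using solve_S(2)[OF h lam z] by simp
  also have "\<dots> \<le> hnorm ipM z" using f0_bound[OF z(1)] .
  also have "\<dots> \<le> hnorm ipM h / (1 - norm lam)" using solve_S(2)[OF h lam z] by simp
  finally show ?thesis .
qed

lemma obs_id: assumes h: "h \<in> M" shows "obs M (\<lambda>f. f 0) T h = h"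
proof
  fix lam
  show "obs M (\<lambda>f. f 0) T h lam = h lam"
  proof (cases "norm lam < 1")
    case True
    have ex: "\<exists>!z. z \<in> M \<and> z - (\<Sum>j\<in>UNIV. (lam $ j) *\<^sub>C T j z) = h"
      using solve_S(1)[OF h True] unfolding Sop_def .
    define z where "z = (THE z. z \<in> M \<and> z - (\<Sum>j\<in>UNIV. (lam $ j) *\<^sub>C T j z) = h)"
    have z: "z \<in> M \<and> z - Sop lam z = h" using theI'[OF ex] unfolding z_def Sop_def .
    have "obs M (\<lambda>f. f 0) T h lam = z 0" using True unfolding obs_def z_def by simp
    also have "\<dots> = h lam" using solve_S(2)[OF h True] z by blast
    finally show ?thesis .
  next
    case False thus ?thesis using on_ball h unfolding obs_def by simp
  qed
qed

end

definition degs :: "nat \<Rightarrow> ('d::finite \<Rightarrow> nat) set" where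
  "degs k = {n. sum n UNIV = k}"

lemma finite_degs[simp]: "finite (degs k :: ('d::finite \<Rightarrow> nat) set)"
proof -
  have "degs k \<subseteq> PiE UNIV (\<lambda>_. {..k})"
  proof
    fix n assume "n \<in> degs k"
    hence "n j \<le> k" for j unfolding degs_def
      using member_le_sum[of j UNIV n] by simp
    thus "n \<in> PiE UNIV (\<lambda>_. {..k})" by (simp add: PiE_UNIV_domain)
  qed
  moreover have "finite (PiE (UNIV::'d set) (\<lambda>_. {..k}))" by (intro finite_PiE) auto
  ultimately show ?thesis by (rule finite_subset)
qed

lemma degs_0: "degs 0 = {\<lambda>_. 0}"
  unfolding degs_def by (auto simp: fun_eq_iff)

lemma sum_upd: "sum (n(j := x)) (UNIV::'d::finite set) + n j = sum n UNIV + (x::nat)"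
proof -
  have "sum (n(j := x)) UNIV = x + sum (n(j := x)) (UNIV - {j})"
    by (subst sum.remove[of UNIV j]) auto
  also have "sum (n(j := x)) (UNIV - {j}) = sum n (UNIV - {j})" by (intro sum.cong) auto
  moreover have "sum n UNIV = n j + sum n (UNIV - {j})" by (subst sum.remove[of UNIV j]) auto
  ultimately show ?thesis by simp
qed

lemma sum_upd_suc[simp]: "sum (n(j := Suc (n j))) (UNIV::'d::finite set) = Suc (sum n UNIV)"
  using sum_upd[of n j "Suc (n j)"] by simp

lemma sum_upd_pred: "0 < n j \<Longrightarrow> Suc (sum (n(j := n j - 1)) (UNIV::'d::finite set)) = sum n UNIV"
  using sum_upd[of n j "n j - 1"] by simp

lemma sum_upd_pred': "0 < (n::'d::finite \<Rightarrow> nat) j \<Longrightarrow> sum (n(j := n j - 1)) (UNIV::'d::finite set) = sum n UNIV - 1"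
  using sum_upd_pred[of n j] by simp

lemma mem1: "0 < m j \<Longrightarrow> m \<in> degs (Suc k) \<Longrightarrow> m(j := m j - 1) \<in> degs k"
  unfolding degs_def using sum_upd_pred'[of m j] by simp

lemma mem2: "n \<in> degs k \<Longrightarrow> n(j := Suc (n j)) \<in> degs (Suc k)"
  unfolding degs_def using sum_upd_suc[of n j] by simp

lemma mem1': "0 < m j \<Longrightarrow> m \<in> degs (Suc k) \<Longrightarrow> m(j := m j - Suc 0) \<in> degs k"
  using mem1 by simp

lemma reindex:
  fixes g :: "('d::finite \<Rightarrow> nat) \<Rightarrow> 'd \<Rightarrow> 'a::comm_monoid_add"
  shows "(\<Sum>m\<in>degs (Suc k). \<Sum>j\<in>{j. 0 < m j}. g (m(j := m j - 1)) j) = (\<Sum>n\<in>degs k. \<Sum>j\<in>UNIV. g n j)"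
proof -
  have "(\<Sum>m\<in>degs (Suc k). \<Sum>j\<in>{j. 0 < m j}. g (m(j := m j - 1)) j)
      = (\<Sum>(m, j)\<in>Sigma (degs (Suc k)) (\<lambda>m. {j. 0 < m j}). g (m(j := m j - 1)) j)"
    by (rule sum.Sigma) auto
  also have "\<dots> = (\<Sum>(n, j)\<in>degs k \<times> UNIV. g n j)"
    by (rule sum.reindex_bij_witness[where i = "\<lambda>(n, j). (n(j := Suc (n j)), j)"
          and j = "\<lambda>(m, j). (m(j := m j - 1), j)"])
       (auto simp: mem1 mem1' mem2)
  also have "\<dots> = (\<Sum>n\<in>degs k. \<Sum>j\<in>UNIV. g n j)"
    by (rule sum.Sigma[symmetric]) auto
  finally show ?thesis .
qed

lemma prod_upd: "(\<Prod>i\<in>UNIV. f i ^ (n(j := Suc (n j))) i) = f j * (\<Prod>i\<in>(UNIV::'d::finite set). (f i :: 'a::comm_semiring_1) ^ n i)"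
proof -
  have "(\<Prod>i\<in>UNIV. f i ^ (n(j := Suc (n j))) i) = f j ^ Suc (n j) * (\<Prod>i\<in>UNIV - {j}. f i ^ (n(j := Suc (n j))) i)"
    by (subst prod.remove[of UNIV j]) auto
  also have "(\<Prod>i\<in>UNIV - {j}. f i ^ (n(j := Suc (n j))) i) = (\<Prod>i\<in>UNIV - {j}. f i ^ n i)"
    by (intro prod.cong) auto
  also have "(\<Prod>i\<in>UNIV. f i ^ n i) = f j ^ n j * (\<Prod>i\<in>UNIV - {j}. f i ^ n i)"
    by (subst prod.remove[of UNIV j]) auto
  ultimately show ?thesis by (simp add: algebra_simps)
qed

lemma mono_pow_upd: "mono_pow lam (n(j := Suc (n j))) = lam $ j * mono_pow lam n"
  unfolding mono_pow_def by (rule prod_upd)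

lemma mfact_pos: "0 < mfact_ratio n"
  unfolding mfact_ratio_def by (simp add: prod_pos)

lemma mfact_zero[simp]: "mfact_ratio (\<lambda>_::'d::finite. 0) = 1"
  unfolding mfact_ratio_def by simp

lemma mfact_upd: assumes "0 < m j"
  shows "mfact_ratio m * real (sum m UNIV) = mfact_ratio (m(j := m j - 1)) * real (m j)"
proof -
  define m' where "m' = m(j := m j - 1)"
  have m: "m = m'(j := Suc (m' j))" using assms by (auto simp: m'_def fun_eq_iff)
  have s: "sum m UNIV = Suc (sum m' UNIV)" unfolding m by (rule sum_upd_suc)
  have p: "(\<Prod>i\<in>UNIV. fact (m i)) = real (Suc (m' j)) * (\<Prod>i\<in>UNIV. fact (m' i) :: real)"
  proof -
    have "(\<Prod>i\<in>UNIV. fact (m i) :: real) = fact (m j) * (\<Prod>i\<in>UNIV - {j}. fact (m i))"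
      by (subst prod.remove[of UNIV j]) auto
    also have "(\<Prod>i\<in>UNIV - {j}. fact (m i) :: real) = (\<Prod>i\<in>UNIV - {j}. fact (m' i))"
      by (intro prod.cong) (auto simp: m'_def)
    also have "fact (m j) = real (Suc (m' j)) * fact (m' j)" unfolding m by simp
    also have "(\<Prod>i\<in>UNIV. fact (m' i) :: real) = fact (m' j) * (\<Prod>i\<in>UNIV - {j}. fact (m' i))"
      by (subst prod.remove[of UNIV j]) auto
    ultimately show ?thesis by (simp add: algebra_simps)
  qed
  have mj: "m j = Suc (m' j)" using assms by (simp add: m'_def)
  have e1: "mfact_ratio m = real (Suc (m' j)) * (\<Prod>i\<in>UNIV. fact (m' i)) / fact (Suc (sum m' UNIV))"
    unfolding mfact_ratio_def p s ..
  have e2: "mfact_ratio m' = (\<Prod>i\<in>UNIV. fact (m' i)) / fact (sum m' UNIV)"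
    unfolding mfact_ratio_def ..
  have "mfact_ratio m * real (sum m UNIV) = mfact_ratio m' * real (m j)"
  proof -
    have gen: "real (Suc a) * P / fact (Suc S) * real (Suc S) = P / fact S * real (Suc a)" for P :: real and S a :: nat
    proof -
      have f: "(fact S::real) > 0" by simp
      have s: "real (Suc S) > 0" by simp
      have "fact (Suc S) = real (Suc S) * (fact S::real)" by (simp only: fact_Suc)
      hence "real (Suc a) * P / fact (Suc S) * real (Suc S) = real (Suc a) * P / (real (Suc S) * fact S) * real (Suc S)" by simp
      also have "\<dots> = P / fact S * real (Suc a)" using f s by (simp only: field_simps) simp
      finally show ?thesis .
    qed
    show ?thesis unfolding e1 e2 s mj by (rule gen)
  qed
  thus ?thesis unfolding m'_def .
qed

lemma sum_pos_part: "(\<Sum>j\<in>{j. 0 < m j}. m j) = sum (m::'d::finite \<Rightarrow> nat) UNIV"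
  by (rule sum.mono_neutral_left) auto

lemma weighted_cs:
  fixes a p :: "'i \<Rightarrow> real"
  assumes "\<And>j. j \<in> J \<Longrightarrow> 0 < p j"
  shows "(\<Sum>j\<in>J. a j)\<^sup>2 \<le> (\<Sum>j\<in>J. p j) * (\<Sum>j\<in>J. (a j)\<^sup>2 / p j)"
proof -
  have "(\<Sum>j\<in>J. a j) = (\<Sum>j\<in>J. sqrt (p j) * (a j / sqrt (p j)))"
  proof (intro sum.cong refl)
    fix j assume "j \<in> J" with assms have "p j > 0" by blast
    thus "a j = sqrt (p j) * (a j / sqrt (p j))" by simp
  qed
  hence "(\<Sum>j\<in>J. a j)\<^sup>2 \<le> (\<Sum>j\<in>J. (sqrt (p j))\<^sup>2) * (\<Sum>j\<in>J. (a j / sqrt (p j))\<^sup>2)"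
    using Cauchy_Schwarz_ineq_sum by metis
  also have "(\<Sum>j\<in>J. (sqrt (p j))\<^sup>2) = (\<Sum>j\<in>J. p j)"
    using assms by (intro sum.cong) (auto simp: less_imp_le)
  also have "(\<Sum>j\<in>J. (a j / sqrt (p j))\<^sup>2) = (\<Sum>j\<in>J. (a j)\<^sup>2 / p j)"
    using assms by (intro sum.cong) (auto simp: power_divide less_imp_le)
  finally show ?thesis .
qed

lemma multinomial:
  fixes x :: "'d::finite \<Rightarrow> real"
  shows "(\<Sum>n\<in>degs k. (\<Prod>j\<in>UNIV. x j ^ n j) / mfact_ratio n) = (\<Sum>j\<in>UNIV. x j) ^ k"
proof (induction k)
  case 0 thus ?case by (simp add: degs_0)
next
  case (Suc k)
  define u where "u n = (\<Prod>j\<in>UNIV. x j ^ n j) / mfact_ratio n" for n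
  have step: "u m = (\<Sum>j\<in>{j. 0 < m j}. x j * u (m(j := m j - 1)))" if m: "m \<in> degs (Suc k)" for m
  proof -
    have "(\<Sum>j\<in>{j. 0 < m j}. x j * u (m(j := m j - 1)))
        = (\<Sum>j\<in>{j. 0 < m j}. u m * (real (m j) / real (Suc k)))"
    proof (intro sum.cong refl)
      fix j assume j: "j \<in> {j. 0 < m j}"
      define m' where "m' = m(j := m j - 1)"
      have mm: "m = m'(j := Suc (m' j))" using j by (auto simp: m'_def fun_eq_iff)
      have pr: "(\<Prod>i\<in>UNIV. x i ^ m i) = x j * (\<Prod>i\<in>UNIV. x i ^ m' i)"
        by (subst mm, rule prod_upd)
      have mf: "mfact_ratio m * real (Suc k) = mfact_ratio m' * real (m j)"
        using mfact_upd[of m j] j m unfolding degs_def m'_def by (simp del: of_nat_sum)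
      have p1: "mfact_ratio m > 0" "mfact_ratio m' > 0" by (simp_all add: mfact_pos)
      have mj: "real (m j) > 0" using j by simp
      have e: "mfact_ratio m' = mfact_ratio m * real (Suc k) / real (m j)" using mf mj by (simp add: field_simps)
      show "x j * u (m(j := m j - 1)) = u m * (real (m j) / real (Suc k))"
        unfolding u_def m'_def[symmetric] pr e using p1 mj by (simp add: field_simps)
    qed
    also have "\<dots> = u m * (\<Sum>j\<in>{j. 0 < m j}. real (m j)) / real (Suc k)"
      by (simp add: sum_distrib_left sum_divide_distrib)
    also have "(\<Sum>j\<in>{j. 0 < m j}. real (m j)) = real (Suc k)"
      using sum_pos_part[of m] m by (simp add: degs_def flip: of_nat_sum)
    also have "u m * real (Suc k) / real (Suc k) = u m" by simp
    finally show ?thesis by (rule sym)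
  qed
  have "(\<Sum>m\<in>degs (Suc k). u m) = (\<Sum>m\<in>degs (Suc k). \<Sum>j\<in>{j. 0 < m j}. x j * u (m(j := m j - 1)))"
    by (intro sum.cong refl step)
  also have "\<dots> = (\<Sum>n\<in>degs k. \<Sum>j\<in>UNIV. x j * u n)"
    by (rule reindex[of "\<lambda>n j. x j * u n"])
  also have "\<dots> = (\<Sum>j\<in>UNIV. x j) * (\<Sum>n\<in>degs k. u n)"
    by (simp add: sum_distrib_left sum_distrib_right mult.commute)
  finally show ?case using Suc unfolding u_def by simp
qed


lemma ynorm_scale: "ynorm (a *\<^sub>C (y::'y::chilbert)) = cmod a * ynorm y"
  unfolding ynorm_def using hs.hnorm_scale[OF hs_Y] by simp
lemma ynorm_triangle: "ynorm ((x::'y::chilbert) + y) \<le> ynorm x + ynorm y"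
  unfolding ynorm_def using hs.hnorm_triangle[OF hs_Y] by simp
lemma ynorm_sum: "ynorm (\<Sum>i\<in>A. (f i::'y::chilbert)) \<le> (\<Sum>i\<in>A. ynorm (f i))"
  unfolding ynorm_def using hs.hnorm_sum[OF hs_Y] by simp
lemma ynorm_eq_zero: "ynorm (y::'y::chilbert) = 0 \<Longrightarrow> y = 0"
  unfolding ynorm_def using hs.hnorm_eq_zero[OF hs_Y] by simp
lemma ynorm_diff_commute: "ynorm ((x::'y::chilbert) - y) = ynorm (y - x)"
  unfolding ynorm_def using hs.hnorm_diff_commute[OF hs_Y] by simp

primrec Gc :: "('d \<Rightarrow> 'x \<Rightarrow> 'x) \<Rightarrow> 'x \<Rightarrow> nat \<Rightarrow> ('d::finite \<Rightarrow> nat) \<Rightarrow> 'x::comm_monoid_add" where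
  "Gc T f 0 n = (if n = (\<lambda>_. 0) then f else 0)"
| "Gc T f (Suc k) n = (\<Sum>j\<in>{j. 0 < n j}. T j (Gc T f k (n(j := n j - 1))))"

definition lowdeg :: "nat \<Rightarrow> ('d::finite \<Rightarrow> nat) set" where
  "lowdeg N = {n. sum n UNIV < N}"

lemma lowdeg_Union: "lowdeg N = (\<Union>k<N. degs k)"
  unfolding lowdeg_def degs_def by auto

lemma finite_lowdeg[simp]: "finite (lowdeg N)"
  unfolding lowdeg_Union by auto

lemma sum_lowdeg: "(\<Sum>n\<in>lowdeg N. h n) = (\<Sum>k<N. \<Sum>n\<in>degs k. h n)"
proof -
  have "(\<Sum>k<N. sum h {n \<in> lowdeg N. sum n UNIV = k}) = sum h (lowdeg N)"
    by (rule sum.group[OF finite_lowdeg]) (auto simp: lowdeg_def)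
  moreover have fib: "{n \<in> lowdeg N. sum n UNIV = k} = degs k" if "k < N" for k
    using that by (auto simp: lowdeg_def degs_def)
  moreover have "(\<Sum>k<N. sum h {n \<in> lowdeg N. sum n UNIV = k}) = (\<Sum>k<N. sum h (degs k))"
    by (rule sum.cong[OF refl]) (simp add: fib)
  ultimately show ?thesis by simp
qed

lemma finite_in_lowdeg: "finite G \<Longrightarrow> \<exists>N. G \<subseteq> lowdeg N"
proof -
  assume G: "finite G"
  have "\<forall>n\<in>G. sum n UNIV < Suc (Max ((\<lambda>n. sum n UNIV) ` G))"
    using G by (simp add: le_imp_less_Suc)
  thus ?thesis unfolding lowdeg_def by blast
qed

lemma sum_high_le:
  fixes b :: "('d::finite \<Rightarrow> nat) \<Rightarrow> real"
  assumes H: "finite H" "H \<inter> lowdeg N = {}" and b: "\<And>n. 0 \<le> b n"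
  shows "\<exists>K. (\<Sum>n\<in>H. b n) \<le> (\<Sum>k\<in>{N..<K}. \<Sum>n\<in>degs k. b n)"
proof -
  obtain K where K: "H \<subseteq> lowdeg K" using finite_in_lowdeg[OF H(1)] by blast
  have HN: "N \<le> sum n UNIV \<and> sum n UNIV < K" if "n \<in> H" for n
    using H(2) K that unfolding lowdeg_def by (metis (mono_tags) IntI empty_iff mem_Collect_eq not_le subsetD)
  have "(\<Sum>n\<in>H. b n) = (\<Sum>k\<in>{N..<K}. sum b {n \<in> H. sum n UNIV = k})"
    by (rule sum.group[symmetric]) (use H HN in auto)
  also have "\<dots> \<le> (\<Sum>k\<in>{N..<K}. \<Sum>n\<in>degs k. b n)"
    by (intro sum_mono sum_mono2 finite_degs) (auto simp: degs_def b)
  finally show ?thesis by blast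
qed

context setting begin

lemma G_in[simp]: "f \<in> M \<Longrightarrow> Gc T f k n \<in> M"
  by (induction k arbitrary: n) auto

lemma Sop_pow_in[simp]: "f \<in> M \<Longrightarrow> (Sop lam ^^ N) f \<in> M"
  by (induction N) auto

lemma Sop_pow_bd: "f \<in> M \<Longrightarrow> hnorm ipM ((Sop lam ^^ N) f) \<le> norm lam ^ N * hnorm ipM f"
proof (induction N)
  case (Suc N)
  have "hnorm ipM ((Sop lam ^^ Suc N) f) \<le> norm lam * hnorm ipM ((Sop lam ^^ N) f)"
    using S_bd Suc by simp
  also have "\<dots> \<le> norm lam * (norm lam ^ N * hnorm ipM f)"
    using Suc by (simp add: mult_left_mono)
  finally show ?case by simp
qed simp

lemma S_pow: assumes f: "f \<in> M"
  shows "(Sop lam ^^ k) f = (\<Sum>n\<in>degs k. mono_pow lam n *\<^sub>C Gc T f k n)"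
proof (induction k)
  case 0
  have "mono_pow lam (\<lambda>_. 0) = 1" by (simp add: mono_pow_def)
  thus ?case by (simp add: degs_0 scaleC_one)
next
  case (Suc k)
  have "(Sop lam ^^ Suc k) f = Sop lam ((Sop lam ^^ k) f)" by simp
  also have "\<dots> = Sop lam (\<Sum>n\<in>degs k. mono_pow lam n *\<^sub>C Gc T f k n)"
    by (simp only: Suc)
  also have "\<dots> = (\<Sum>j\<in>UNIV. \<Sum>n\<in>degs k. (lam $ j * mono_pow lam n) *\<^sub>C T j (Gc T f k n))"
    unfolding Sop_def using f by (simp add: T_sum T_scale scaleC_sum_right scaleC_scaleC)
  also have "\<dots> = (\<Sum>n\<in>degs k. \<Sum>j\<in>UNIV. mono_pow lam (n(j := Suc (n j))) *\<^sub>C T j (Gc T f k n))"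
    by (subst sum.swap) (simp add: mono_pow_upd)
  also have "\<dots> = (\<Sum>m\<in>degs (Suc k). \<Sum>j\<in>{j. 0 < m j}.
       mono_pow lam ((m(j := m j - 1))(j := Suc ((m(j := m j - 1)) j))) *\<^sub>C T j (Gc T f k (m(j := m j - 1))))"
    by (rule reindex[symmetric])
  also have "\<dots> = (\<Sum>m\<in>degs (Suc k). \<Sum>j\<in>{j. 0 < m j}. mono_pow lam m *\<^sub>C T j (Gc T f k (m(j := m j - 1))))"
  proof (intro sum.cong refl)
    fix m :: "'d \<Rightarrow> nat" and j assume "j \<in> {j. 0 < m j}"
    hence "(m(j := m j - 1))(j := Suc ((m(j := m j - 1)) j)) = m" by (auto simp: fun_eq_iff)
    thus "mono_pow lam ((m(j := m j - 1))(j := Suc ((m(j := m j - 1)) j))) *\<^sub>C T j (Gc T f k (m(j := m j - 1)))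
        = mono_pow lam m *\<^sub>C T j (Gc T f k (m(j := m j - 1)))" by simp
  qed
  also have "\<dots> = (\<Sum>m\<in>degs (Suc k). mono_pow lam m *\<^sub>C Gc T f (Suc k) m)"
    by (simp add: scaleC_sum_right)
  finally show ?case .
qed

definition coef :: "(complex^'d \<Rightarrow> 'y) \<Rightarrow> ('d \<Rightarrow> nat) \<Rightarrow> 'y" where
  "coef f n = Gc T f (sum n UNIV) n 0"

lemma S_pow_0: assumes f: "f \<in> M"
  shows "(Sop lam ^^ k) f 0 = (\<Sum>n\<in>degs k. mono_pow lam n *\<^sub>C coef f n)"
proof -
  have "(Sop lam ^^ k) f 0 = (\<Sum>n\<in>degs k. mono_pow lam n *\<^sub>C Gc T f k n 0)"
    unfolding S_pow[OF f] by (simp add: fun_sum_apply)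
  also have "\<dots> = (\<Sum>n\<in>degs k. mono_pow lam n *\<^sub>C coef f n)"
    by (intro sum.cong refl) (simp add: coef_def degs_def)
  finally show ?thesis .
qed

lemma expansion: assumes f: "f \<in> M" and lam: "norm lam < 1"
  shows "f lam = (\<Sum>k<N. \<Sum>n\<in>degs k. mono_pow lam n *\<^sub>C coef f n) + (Sop lam ^^ N) f lam"
proof (induction N)
  case (Suc N)
  have "(Sop lam ^^ N) f lam = (Sop lam ^^ N) f 0 + (Sop lam ^^ Suc N) f lam"
    using shift[OF Sop_pow_in[OF f] lam] by simp
  with Suc show ?case using S_pow_0[OF f] by (simp add: algebra_simps)
qed simp

lemma expansion_lowdeg: assumes f: "f \<in> M" and lam: "norm lam < 1"
  shows "ynorm (f lam - (\<Sum>n\<in>lowdeg N. mono_pow lam n *\<^sub>C coef f n)) \<le> norm lam ^ N * hnorm ipM f / (1 - norm lam)"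
proof -
  have "f lam - (\<Sum>n\<in>lowdeg N. mono_pow lam n *\<^sub>C coef f n) = (Sop lam ^^ N) f lam"
    using expansion[OF f lam, of N] by (simp add: sum_lowdeg)
  hence "ynorm (f lam - (\<Sum>n\<in>lowdeg N. mono_pow lam n *\<^sub>C coef f n)) \<le> hnorm ipM ((Sop lam ^^ N) f) / (1 - norm lam)"
    using eval_bound[OF Sop_pow_in[OF f] lam] by simp
  also have "\<dots> \<le> norm lam ^ N * hnorm ipM f / (1 - norm lam)"
    using Sop_pow_bd[OF f] lam by (simp add: divide_right_mono)
  finally show ?thesis .
qed

end

context setting begin

definition Phi :: "(complex^'d \<Rightarrow> 'y) \<Rightarrow> nat \<Rightarrow> real" where
  "Phi f k = (\<Sum>n\<in>degs k. mfact_ratio n * (hnorm ipM (Gc T f k n))\<^sup>2)"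

lemma energy_pt: assumes f: "f \<in> M" and m: "m \<in> degs (Suc k)"
  shows "mfact_ratio m * (hnorm ipM (Gc T f (Suc k) m))\<^sup>2
     \<le> (\<Sum>j\<in>{j. 0 < m j}. mfact_ratio (m(j := m j - 1)) * (hnorm ipM (T j (Gc T f k (m(j := m j - 1)))))\<^sup>2)"
proof -
  define J where "J = {j. 0 < m j}"
  define a where "a j = hnorm ipM (T j (Gc T f k (m(j := m j - 1))))" for j
  have a0: "0 \<le> a j" for j unfolding a_def using f by simp
  have "hnorm ipM (Gc T f (Suc k) m) \<le> (\<Sum>j\<in>J. a j)"
    unfolding Gc.simps(2) J_def a_def using f by (intro hnorm_sum) simp
  hence "(hnorm ipM (Gc T f (Suc k) m))\<^sup>2 \<le> (\<Sum>j\<in>J. a j)\<^sup>2"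
    using f by (intro power_mono) simp_all
  also have "\<dots> \<le> (\<Sum>j\<in>J. real (m j)) * (\<Sum>j\<in>J. (a j)\<^sup>2 / real (m j))"
    by (rule weighted_cs) (simp add: J_def)
  also have "(\<Sum>j\<in>J. real (m j)) = real (Suc k)"
    using sum_pos_part[of m] m unfolding J_def degs_def by (simp flip: of_nat_sum)
  finally have "mfact_ratio m * (hnorm ipM (Gc T f (Suc k) m))\<^sup>2
      \<le> mfact_ratio m * (real (Suc k) * (\<Sum>j\<in>J. (a j)\<^sup>2 / real (m j)))"
    using mfact_pos[of m] by (simp add: mult_left_mono)
  also have "\<dots> = (\<Sum>j\<in>J. mfact_ratio m * real (Suc k) / real (m j) * (a j)\<^sup>2)"
    by (simp add: sum_distrib_left field_simps)
  also have "\<dots> = (\<Sum>j\<in>J. mfact_ratio (m(j := m j - 1)) * (a j)\<^sup>2)"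
  proof (rule sum.cong[OF refl])
    fix j assume j: "j \<in> J"
    have "mfact_ratio m * real (sum m UNIV) = mfact_ratio (m(j := m j - 1)) * real (m j)"
      using j unfolding J_def by (intro mfact_upd) simp
    moreover have "sum m UNIV = Suc k" using m by (simp add: degs_def)
    moreover have "real (m j) > 0" using j J_def by simp
    ultimately have "mfact_ratio m * real (Suc k) / real (m j) = mfact_ratio (m(j := m j - 1))"
      by (simp add: field_simps)
    thus "mfact_ratio m * real (Suc k) / real (m j) * (a j)\<^sup>2 = mfact_ratio (m(j := m j - 1)) * (a j)\<^sup>2"
      by simp
  qed
  finally show ?thesis unfolding J_def a_def .
qed

lemma energy_step: assumes f: "f \<in> M"
  shows "Phi f (Suc k) + (\<Sum>n\<in>degs k. mfact_ratio n * (ynorm (Gc T f k n 0))\<^sup>2) \<le> Phi f k"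
proof -
  have "Phi f (Suc k) \<le> (\<Sum>m\<in>degs (Suc k). \<Sum>j\<in>{j. 0 < m j}. mfact_ratio (m(j := m j - 1)) * (hnorm ipM (T j (Gc T f k (m(j := m j - 1)))))\<^sup>2)"
    unfolding Phi_def by (intro sum_mono energy_pt f)
  also have "\<dots> = (\<Sum>n\<in>degs k. \<Sum>j\<in>UNIV. mfact_ratio n * (hnorm ipM (T j (Gc T f k n)))\<^sup>2)"
    by (rule reindex[of "\<lambda>n j. mfact_ratio n * (hnorm ipM (T j (Gc T f k n)))\<^sup>2"])
  also have "\<dots> = (\<Sum>n\<in>degs k. mfact_ratio n * (\<Sum>j\<in>UNIV. (hnorm ipM (T j (Gc T f k n)))\<^sup>2))"
    by (simp add: sum_distrib_left)
  also have "\<dots> \<le> (\<Sum>n\<in>degs k. mfact_ratio n * ((hnorm ipM (Gc T f k n))\<^sup>2 - (ynorm (Gc T f k n 0))\<^sup>2))"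
  proof (intro sum_mono mult_left_mono)
    fix n show "(\<Sum>j\<in>UNIV. (hnorm ipM (T j (Gc T f k n)))\<^sup>2) \<le> (hnorm ipM (Gc T f k n))\<^sup>2 - (ynorm (Gc T f k n 0))\<^sup>2"
      using contr[of "Gc T f k n"] f by simp
    show "0 \<le> mfact_ratio n" using mfact_pos[of n] by simp
  qed
  also have "\<dots> = Phi f k - (\<Sum>n\<in>degs k. mfact_ratio n * (ynorm (Gc T f k n 0))\<^sup>2)"
    unfolding Phi_def by (simp add: sum_subtractf right_diff_distrib)
  finally show ?thesis by simp
qed

lemma Phi_nonneg: "f \<in> M \<Longrightarrow> 0 \<le> Phi f k"
  unfolding Phi_def by (intro sum_nonneg mult_nonneg_nonneg) (simp_all add: less_imp_le mfact_pos)

lemma Phi_0: "Phi f 0 = (hnorm ipM f)\<^sup>2"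
  unfolding Phi_def by (simp add: degs_0)

lemma coef_energy: assumes f: "f \<in> M"
  shows "(\<Sum>n\<in>lowdeg N. mfact_ratio n * (ynorm (coef f n))\<^sup>2) \<le> (hnorm ipM f)\<^sup>2"
proof -
  have "(\<Sum>k<N. \<Sum>n\<in>degs k. mfact_ratio n * (ynorm (coef f n))\<^sup>2) + Phi f N \<le> Phi f 0" for N
  proof (induction N)
    case (Suc N)
    have "(\<Sum>n\<in>degs N. mfact_ratio n * (ynorm (coef f n))\<^sup>2) = (\<Sum>n\<in>degs N. mfact_ratio n * (ynorm (Gc T f N n 0))\<^sup>2)"
      by (intro sum.cong refl) (simp add: coef_def degs_def)
    thus ?case using Suc energy_step[OF f, of N] by simp
  qed simp
  from this[of N] Phi_nonneg[OF f, of N] show ?thesis by (simp add: sum_lowdeg Phi_0)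
qed

lemma coef_energy_deg: assumes f: "f \<in> M"
  shows "(\<Sum>n\<in>degs k. mfact_ratio n * (ynorm (coef f n))\<^sup>2) \<le> (hnorm ipM f)\<^sup>2"
proof -
  have "(\<Sum>n\<in>degs k. mfact_ratio n * (ynorm (coef f n))\<^sup>2) \<le> (\<Sum>n\<in>lowdeg (Suc k). mfact_ratio n * (ynorm (coef f n))\<^sup>2)"
    by (intro sum_mono2 finite_lowdeg) (auto simp: lowdeg_def degs_def less_imp_le mfact_pos)
  also have "\<dots> \<le> (hnorm ipM f)\<^sup>2" by (rule coef_energy[OF f])
  finally show ?thesis .
qed

lemma mfact_nz: "mfact_ratio n \<noteq> 0" using mfact_pos[of n] by simp

lemma cmod_mono_pow_sq: "(cmod (mono_pow lam n))\<^sup>2 = (\<Prod>j\<in>UNIV. ((cmod (lam $ j))\<^sup>2) ^ n j)"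
proof -
  have "(cmod (mono_pow lam n))\<^sup>2 = (\<Prod>j\<in>UNIV. cmod (lam $ j) ^ n j)\<^sup>2"
    unfolding mono_pow_def by (simp add: prod_norm[symmetric] norm_power)
  also have "\<dots> = (\<Prod>j\<in>UNIV. (cmod (lam $ j) ^ n j)\<^sup>2)" by (rule prod_power_distrib)
  also have "\<dots> = (\<Prod>j\<in>UNIV. ((cmod (lam $ j))\<^sup>2) ^ n j)"
    by (intro prod.cong refl) (simp add: power_mult[symmetric] mult.commute)
  finally show ?thesis .
qed

lemma coef_bound_deg: assumes f: "f \<in> M"
  shows "(\<Sum>n\<in>degs k. ynorm (mono_pow lam n *\<^sub>C coef f n)) \<le> norm lam ^ k * hnorm ipM f"
proof -
  have "(\<Sum>n\<in>degs k. ynorm (mono_pow lam n *\<^sub>C coef f n))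
      = (\<Sum>n\<in>degs k. (cmod (mono_pow lam n) / sqrt (mfact_ratio n)) * (sqrt (mfact_ratio n) * ynorm (coef f n)))"
    by (intro sum.cong refl) (simp add: ynorm_scale mfact_pos less_imp_le mfact_nz)
  hence "(\<Sum>n\<in>degs k. ynorm (mono_pow lam n *\<^sub>C coef f n))\<^sup>2
      \<le> (\<Sum>n\<in>degs k. (cmod (mono_pow lam n) / sqrt (mfact_ratio n))\<^sup>2) * (\<Sum>n\<in>degs k. (sqrt (mfact_ratio n) * ynorm (coef f n))\<^sup>2)"
    by (simp only:) (rule Cauchy_Schwarz_ineq_sum)
  also have "(\<Sum>n\<in>degs k. (cmod (mono_pow lam n) / sqrt (mfact_ratio n))\<^sup>2) = (\<Sum>n\<in>degs k. (\<Prod>j\<in>UNIV. ((cmod (lam $ j))\<^sup>2) ^ n j) / mfact_ratio n)"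
    by (intro sum.cong refl) (simp add: power_divide cmod_mono_pow_sq mfact_pos less_imp_le)
  also have "\<dots> = ((norm lam)\<^sup>2) ^ k" by (simp add: multinomial norm_vec_sq)
  also have "(\<Sum>n\<in>degs k. (sqrt (mfact_ratio n) * ynorm (coef f n))\<^sup>2) = (\<Sum>n\<in>degs k. mfact_ratio n * (ynorm (coef f n))\<^sup>2)"
    by (intro sum.cong refl) (simp add: power_mult_distrib mfact_pos less_imp_le)
  also have "((norm lam)\<^sup>2) ^ k * \<dots> \<le> ((norm lam)\<^sup>2) ^ k * (hnorm ipM f)\<^sup>2"
    by (intro mult_left_mono coef_energy_deg f) simp
  also have "\<dots> = (norm lam ^ k * hnorm ipM f)\<^sup>2" by (simp add: power_mult_distrib power_mult[symmetric] mult.commute)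
  finally show ?thesis by (rule power2_le_imp_le) (simp add: f)
qed

lemma yhas: assumes f: "f \<in> M" and lam: "norm lam < 1"
  shows "yhas_sum (\<lambda>n. mono_pow lam n *\<^sub>C coef f n) UNIV (f lam)"
  unfolding yhas_sum_def
proof (intro allI impI)
  fix e :: real assume e: "e > 0"
  define r where "r = norm lam"
  define hf where "hf = hnorm ipM f"
  have r: "0 \<le> r" "r < 1" using lam by (simp_all add: r_def)
  have hf: "0 \<le> hf" using f by (simp add: hf_def)
  define a where "a n = mono_pow lam n *\<^sub>C coef f n" for n
  have "(\<lambda>N. r^N * hf / (1 - r)) \<longlonglongrightarrow> 0"
    using r by (intro tendsto_divide_zero tendsto_mult_left_zero LIMSEQ_power_zero) auto
  then obtain N where N: "r^N * hf / (1 - r) < e / 2"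
    using e by (metis (no_types, lifting) order_tendstoD(2) eventually_sequentially half_gt_zero order_refl)
  have "ynorm (sum a G - f lam) < e" if G: "finite G" "lowdeg N \<subseteq> G" "G \<subseteq> UNIV" for G
  proof -
    have "sum a G = sum a (G - lowdeg N) + sum a (lowdeg N)"
      using G by (intro sum.subset_diff) auto
    hence eq: "sum a G - f lam = sum a (G - lowdeg N) + (sum a (lowdeg N) - f lam)" by simp
    have "ynorm (sum a G - f lam) \<le> ynorm (sum a (G - lowdeg N)) + ynorm (sum a (lowdeg N) - f lam)"
      unfolding eq by (rule ynorm_triangle)
    also have "ynorm (sum a (lowdeg N) - f lam) \<le> r^N * hf / (1 - r)"
      using expansion_lowdeg[OF f lam, of N] ynorm_diff_commute[of "sum a (lowdeg N)" "f lam"]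
      unfolding a_def r_def hf_def by simp
    also have "ynorm (sum a (G - lowdeg N)) \<le> (\<Sum>n\<in>G - lowdeg N. ynorm (a n))" by (rule ynorm_sum)
    also obtain K where "(\<Sum>n\<in>G - lowdeg N. ynorm (a n)) \<le> (\<Sum>k\<in>{N..<K}. \<Sum>n\<in>degs k. ynorm (a n))"
      using sum_high_le[of "G - lowdeg N" N "\<lambda>n. ynorm (a n)"] G by auto
    also have "\<dots> \<le> (\<Sum>k\<in>{N..<K}. r^k * hf)"
      by (intro sum_mono) (unfold a_def r_def hf_def, rule coef_bound_deg[OF f])
    also have "\<dots> = (\<Sum>k\<in>{N..<K}. r^k) * hf" by (simp add: sum_distrib_right)
    also have "\<dots> \<le> r^N / (1 - r) * hf" by (intro mult_right_mono geom_sum_le r hf)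
    finally have "ynorm (sum a G - f lam) \<le> r^N / (1 - r) * hf + r^N * hf / (1 - r)" by simp
    moreover have "r^N / (1 - r) * hf = r^N * hf / (1 - r)" by simp
    ultimately show ?thesis using N by linarith
  qed
  thus "\<exists>F. finite F \<and> F \<subseteq> UNIV \<and> (\<forall>G. finite G \<and> F \<subseteq> G \<and> G \<subseteq> UNIV \<longrightarrow> ynorm (sum a G - f lam) < e)"
    by (intro exI[of _ "lowdeg N"]) auto
qed

lemma coef_summable: assumes f: "f \<in> M"
  shows "(\<lambda>n. mfact_ratio n * (ynorm (coef f n))\<^sup>2) summable_on UNIV"
    and "(\<Sum>\<^sub>\<infinity>n. mfact_ratio n * (ynorm (coef f n))\<^sup>2) \<le> (hnorm ipM f)\<^sup>2"
proof -
  have nn: "0 \<le> mfact_ratio n * (ynorm (coef f n))\<^sup>2" for n by (simp add: mfact_pos less_imp_le)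
  have fin: "(\<Sum>n\<in>F. mfact_ratio n * (ynorm (coef f n))\<^sup>2) \<le> (hnorm ipM f)\<^sup>2" if F: "finite F" for F
  proof -
    obtain N where "F \<subseteq> lowdeg N" using finite_in_lowdeg[OF F] by blast
    hence "(\<Sum>n\<in>F. mfact_ratio n * (ynorm (coef f n))\<^sup>2) \<le> (\<Sum>n\<in>lowdeg N. mfact_ratio n * (ynorm (coef f n))\<^sup>2)"
      by (intro sum_mono2 nn) auto
    also have "\<dots> \<le> (hnorm ipM f)\<^sup>2" by (rule coef_energy[OF f])
    finally show ?thesis .
  qed
  show sm: "(\<lambda>n. mfact_ratio n * (ynorm (coef f n))\<^sup>2) summable_on UNIV"
    by (rule nonneg_bdd_above_summable_on) (use nn fin in \<open>auto intro!: bdd_aboveI\<close>)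
  show "(\<Sum>\<^sub>\<infinity>n. mfact_ratio n * (ynorm (coef f n))\<^sup>2) \<le> (hnorm ipM f)\<^sup>2"
    by (rule infsum_le_finite_sums[OF sm fin]) 
qed

lemma arv_rep_coef: assumes f: "f \<in> M" shows "arv_rep f (coef f)"
  unfolding arv_rep_def using coef_summable(1)[OF f] yhas[OF f] on_ball f by blast

end

lemma powser_unique:
  fixes b :: "nat \<Rightarrow> complex"
  assumes d: "0 < \<delta>" and s: "\<And>t. norm t < \<delta> \<Longrightarrow> (\<lambda>k. b k * t^k) sums 0"
  shows "b k = 0"
proof (induction k rule: less_induct)
  case (less k)
  have sm: "(\<lambda>i. b (i + k) * t^i) sums 0" if t: "t \<noteq> 0" "norm t < \<delta>" for t
  proof -
    have "(\<lambda>i. b i * t^i) sums (0 + (\<Sum>i<k. b i * t^i))"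
      using s[OF t(2)] less by simp
    hence "(\<lambda>i. b (i + k) * t^(i + k)) sums 0"
      by (subst sums_iff_shift) simp
    hence "(\<lambda>i. b (i + k) * t^(i + k) / t^k) sums (0 / t^k)" by (rule sums_divide)
    moreover have "b (i + k) * t^(i + k) / t^k = b (i + k) * t^i" for i
      using t by (simp add: power_add)
    ultimately show ?thesis by simp
  qed
  have "((\<lambda>_. 0) \<longlongrightarrow> (\<lambda>i. b (i + k)) 0) (at (0::complex))"
    by (rule powser_limit_0_strong[OF d]) (use sm in simp)
  from tendsto_unique[OF at_neq_bot this tendsto_const] show ?case by simp
qed

lemma digits_inj:
  fixes x y :: "nat \<Rightarrow> nat"
  assumes "\<And>i. i < d \<Longrightarrow> x i < B" "\<And>i. i < d \<Longrightarrow> y i < B"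
    and "(\<Sum>i<d. x i * B^i) = (\<Sum>i<d. y i * B^i)"
  shows "i < d \<Longrightarrow> x i = y i"
  using assms
proof (induction d arbitrary: x y i)
  case 0 thus ?case by simp
next
  case (Suc d)
  have split: "(\<Sum>i<Suc d. z i * B^i) = z 0 + B * (\<Sum>i<d. z (Suc i) * B^i)" for z :: "nat \<Rightarrow> nat"
    by (subst sum.lessThan_Suc_shift) (simp add: sum_distrib_left algebra_simps)
  have x0: "x 0 < B" and y0: "y 0 < B" using Suc.prems by auto
  have eq: "x 0 + B * (\<Sum>i<d. x (Suc i) * B^i) = y 0 + B * (\<Sum>i<d. y (Suc i) * B^i)"
    using Suc.prems(4) unfolding split .
  have "x 0 = y 0"
    using arg_cong[OF eq, of "\<lambda>v. v mod B"] x0 y0 by simp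
  moreover have "(\<Sum>i<d. x (Suc i) * B^i) = (\<Sum>i<d. y (Suc i) * B^i)"
    using arg_cong[OF eq, of "\<lambda>v. v div B"] x0 y0 by simp
  hence "x (Suc j) = y (Suc j)" if j: "j < d" for j
    by (intro Suc.IH[where x = "\<lambda>i. x (Suc i)" and y = "\<lambda>i. y (Suc i)"] j) (use Suc.prems(2,3) in auto)
  ultimately show ?case using Suc.prems(1) by (cases i) simp_all
qed

lemma norm_vec_sq2: "(norm (lam::complex^'d::finite))\<^sup>2 = (\<Sum>j\<in>UNIV. (cmod (lam $ j))\<^sup>2)"
  unfolding norm_vec_def L2_set_def by (simp add: sum_nonneg)

lemma norm_scale_vec: "norm (\<chi> j. t * (z::complex^'d::finite) $ j) = cmod t * norm z"
proof -
  have "(norm (\<chi> j. t * z $ j))\<^sup>2 = (cmod t * norm z)\<^sup>2"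
    unfolding power_mult_distrib norm_vec_sq2 by (simp add: norm_mult power_mult_distrib sum_distrib_left)
  thus ?thesis by (simp add: power2_eq_iff_nonneg)
qed

lemma homog_unique:
  fixes a :: "('d::finite \<Rightarrow> nat) \<Rightarrow> complex"
  assumes z: "\<And>\<zeta>::complex^'d. norm \<zeta> < 1 \<Longrightarrow> (\<Sum>n\<in>degs k. mono_pow \<zeta> n * a n) = 0"
    and n0: "n0 \<in> degs k"
  shows "a n0 = 0"
proof -
  define d where "d = card (UNIV::'d set)"
  have d0: "d > 0" unfolding d_def by simp
  obtain \<iota> :: "'d \<Rightarrow> nat" where \<iota>: "bij_betw \<iota> UNIV {0..<d}"
    using ex_bij_betw_finite_nat[of "UNIV::'d set"] unfolding d_def by auto
  define B where "B = Suc k"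
  define \<phi> where "\<phi> n = (\<Sum>j\<in>UNIV. n j * B ^ \<iota> j)" for n :: "'d \<Rightarrow> nat"
  define \<delta> :: real where "\<delta> = 1 / real d"
  have \<delta>: "0 < \<delta>" "\<delta> \<le> 1" using d0 by (auto simp: \<delta>_def)
  define \<zeta> where "\<zeta> s = (\<chi> j. s ^ (B ^ \<iota> j))" for s :: complex
  have mp: "mono_pow (\<zeta> s) n = s ^ \<phi> n" for s n
    unfolding mono_pow_def \<zeta>_def \<phi>_def by (simp add: power_sum power_mult[symmetric] mult.commute)
  have nz: "norm (\<zeta> s) < 1" if s: "norm s < \<delta>" for s
  proof -
    have s1: "cmod s \<le> 1" using s \<delta> by simp
    have "norm (\<zeta> s) \<le> (\<Sum>j\<in>UNIV. cmod (\<zeta> s $ j))" unfolding norm_vec_def by (rule L2_set_le_sum) simp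
    also have "\<dots> \<le> (\<Sum>j\<in>(UNIV::'d set). cmod s)"
    proof (intro sum_mono)
      fix j
      have "cmod s ^ (B ^ \<iota> j) \<le> cmod s ^ 1"
        by (rule power_decreasing) (use s1 in \<open>simp_all add: B_def\<close>)
      thus "cmod (\<zeta> s $ j) \<le> cmod s" by (simp add: \<zeta>_def norm_power)
    qed
    also have "\<dots> = real d * cmod s" by (simp add: d_def)
    also have "\<dots> < real d * \<delta>" using s d0 by simp
    also have "\<dots> = 1" using d0 by (simp add: \<delta>_def)
    finally show ?thesis .
  qed
  define b where "b m = (\<Sum>n\<in>{n\<in>degs k. \<phi> n = m}. a n)" for m
  have "b m = 0" for m
  proof (rule powser_unique[OF \<delta>(1)])
    fix s :: complex assume s: "norm s < \<delta>"
    have "(\<lambda>m. b m * s^m) sums (\<Sum>m\<in>\<phi> ` degs k. b m * s^m)"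
    proof (rule sums_finite)
      fix m assume "m \<notin> \<phi> ` degs k"
      hence E: "{n\<in>degs k. \<phi> n = m} = {}" by auto
      show "b m * s^m = 0" unfolding b_def E by simp
    qed simp
    also have "(\<Sum>m\<in>\<phi> ` degs k. b m * s^m) = (\<Sum>m\<in>\<phi> ` degs k. \<Sum>n\<in>{n\<in>degs k. \<phi> n = m}. s ^ \<phi> n * a n)"
    proof (rule sum.cong[OF refl])
      fix m
      have "b m * s^m = (\<Sum>n\<in>{n\<in>degs k. \<phi> n = m}. a n * s^m)"
        unfolding b_def by (rule sum_distrib_right)
      also have "\<dots> = (\<Sum>n\<in>{n\<in>degs k. \<phi> n = m}. s ^ \<phi> n * a n)"
        by (intro sum.cong refl) (simp add: mult.commute)
      finally show "b m * s^m = (\<Sum>n\<in>{n\<in>degs k. \<phi> n = m}. s ^ \<phi> n * a n)" .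
    qed
    also have "\<dots> = (\<Sum>n\<in>degs k. s ^ \<phi> n * a n)"
      by (rule sum.group) auto
    also have "\<dots> = 0" using z[OF nz[OF s]] by (simp add: mp)
    finally show "(\<lambda>m. b m * s^m) sums 0" .
  qed
  moreover have "{n\<in>degs k. \<phi> n = \<phi> n0} = {n0}"
  proof (intro equalityI subsetI)
    fix n assume "n \<in> {n\<in>degs k. \<phi> n = \<phi> n0}"
    hence n: "n \<in> degs k" "\<phi> n = \<phi> n0" by auto
    define inv\<iota> where "inv\<iota> = the_inv_into UNIV \<iota>"
    have inv1: "inv\<iota> (\<iota> j) = j" for j
      unfolding inv\<iota>_def using \<iota> by (simp add: bij_betw_def the_inv_into_f_f)
    have repr: "\<phi> m = (\<Sum>i<d. m (inv\<iota> i) * B ^ i)" for m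
    proof -
      have "\<phi> m = (\<Sum>j\<in>UNIV. (\<lambda>i. m (inv\<iota> i) * B ^ i) (\<iota> j))" unfolding \<phi>_def inv1 ..
      also have "\<dots> = (\<Sum>i\<in>{0..<d}. m (inv\<iota> i) * B ^ i)" by (rule sum.reindex_bij_betw[OF \<iota>])
      finally show ?thesis by (simp add: atLeast0LessThan)
    qed
    have small: "m j < B" if "m \<in> degs k" for m j
      using that member_le_sum[of j UNIV m] unfolding degs_def B_def by simp
    have "n (inv\<iota> i) = n0 (inv\<iota> i)" if "i < d" for i
      by (rule digits_inj[of d "\<lambda>i. n (inv\<iota> i)" B "\<lambda>i. n0 (inv\<iota> i)"])
         (use n n0 small that in \<open>simp_all add: repr[symmetric]\<close>)
    moreover have "\<iota> j < d" for j using \<iota> by (auto simp: bij_betw_def)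
    ultimately have "n j = n0 j" for j using inv1 by metis
    thus "n \<in> {n0}" by auto
  qed (use n0 in auto)
  ultimately show ?thesis using b_def[of "\<phi> n0"] by simp
qed


lemma series_unique:
  fixes a :: "('d::finite \<Rightarrow> nat) \<Rightarrow> complex"
  assumes h: "\<And>lam::complex^'d. norm lam < 1 \<Longrightarrow> ((\<lambda>n. mono_pow lam n * a n) has_sum 0) UNIV"
  shows "a n = 0"
proof -
  have P0: "(\<Sum>n\<in>degs k. mono_pow \<zeta> n * a n) = 0" if \<zeta>: "norm \<zeta> < 1" for \<zeta> :: "complex^'d" and k
  proof -
    define P where "P k = (\<Sum>n\<in>degs k. mono_pow \<zeta> n * a n)" for k
    have "P k = 0"
    proof (rule powser_unique[of 1])
      fix t :: complex assume t: "norm t < 1"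
      define lam where "lam = (\<chi> j. t * \<zeta> $ j)"
      have "norm lam = cmod t * norm \<zeta>" unfolding lam_def by (rule norm_scale_vec)
      also have "\<dots> \<le> norm \<zeta>" using t by (intro mult_left_le_one_le) auto
      finally have nl: "norm lam < 1" using \<zeta> by simp
      have mp: "mono_pow lam n = t ^ sum n UNIV * mono_pow \<zeta> n" for n
        unfolding mono_pow_def lam_def by (simp add: power_mult_distrib prod.distrib power_sum)
      have hs: "((\<lambda>n. t ^ sum n UNIV * (mono_pow \<zeta> n * a n)) has_sum 0) UNIV"
        using h[OF nl] by (simp add: mp mult.assoc)
      define g where "g p = t ^ fst p * (mono_pow \<zeta> (snd p) * a (snd p))" for p :: "nat \<times> ('d \<Rightarrow> nat)"
      have inj: "inj_on (\<lambda>n. (sum n UNIV, n)) (UNIV :: ('d \<Rightarrow> nat) set)" by (auto simp: inj_on_def)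
      have img: "(\<lambda>n. (sum n UNIV, n)) ` (UNIV :: ('d \<Rightarrow> nat) set) = Sigma UNIV degs"
        by (auto simp: degs_def image_iff)
      have "(g has_sum 0) ((\<lambda>n. (sum n UNIV, n)) ` UNIV)"
        using has_sum_reindex[OF inj, of g 0] hs by (simp add: g_def o_def)
      hence "(g has_sum 0) (Sigma UNIV degs)" unfolding img .
      hence "((\<lambda>k. \<Sum>n\<in>degs k. g (k, n)) has_sum 0) UNIV"
        by (rule has_sum_SigmaD) (rule has_sum_finite[OF finite_degs])
      hence "(\<lambda>k. \<Sum>n\<in>degs k. g (k, n)) sums 0" by (rule has_sum_imp_sums)
      moreover have "(\<Sum>n\<in>degs k. g (k, n)) = P k * t^k" for k
        unfolding g_def P_def by (simp add: sum_distrib_left sum_distrib_right mult.commute)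
      ultimately show "(\<lambda>k. P k * t^k) sums 0" by simp
    qed simp
    thus ?thesis unfolding P_def .
  qed
  show ?thesis
    by (rule homog_unique[where k = "sum n UNIV"]) (use P0 in \<open>simp_all add: degs_def\<close>)
qed

lemma yhas_diff: assumes "yhas_sum g1 S l" "yhas_sum g2 S l"
  shows "yhas_sum (\<lambda>n. g1 n - g2 n) S 0"
  unfolding yhas_sum_def
proof (intro allI impI)
  fix e :: real assume e: "e > 0"
  obtain F1 where F1: "finite F1" "F1 \<subseteq> S" "\<And>G. finite G \<Longrightarrow> F1 \<subseteq> G \<Longrightarrow> G \<subseteq> S \<Longrightarrow> ynorm (sum g1 G - l) < e/2"
    using assms(1) e unfolding yhas_sum_def by (meson half_gt_zero)
  obtain F2 where F2: "finite F2" "F2 \<subseteq> S" "\<And>G. finite G \<Longrightarrow> F2 \<subseteq> G \<Longrightarrow> G \<subseteq> S \<Longrightarrow> ynorm (sum g2 G - l) < e/2"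
    using assms(2) e unfolding yhas_sum_def by (meson half_gt_zero)
  have "ynorm ((\<Sum>n\<in>G. g1 n - g2 n) - 0) < e" if G: "finite G" "F1 \<union> F2 \<subseteq> G" "G \<subseteq> S" for G
  proof -
    have eq: "(\<Sum>n\<in>G. g1 n - g2 n) - 0 = (sum g1 G - l) + (l - sum g2 G)"
      by (simp add: sum_subtractf)
    have "ynorm ((\<Sum>n\<in>G. g1 n - g2 n) - 0) \<le> ynorm (sum g1 G - l) + ynorm (l - sum g2 G)"
      unfolding eq by (rule ynorm_triangle)
    also have "ynorm (l - sum g2 G) = ynorm (sum g2 G - l)" by (rule ynorm_diff_commute)
    finally show ?thesis using F1(3)[of G] F2(3)[of G] G by simp
  qed
  thus "\<exists>F. finite F \<and> F \<subseteq> S \<and> (\<forall>G. finite G \<and> F \<subseteq> G \<and> G \<subseteq> S \<longrightarrow> ynorm (sum (\<lambda>n. g1 n - g2 n) G - 0) < e)"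
    using F1 F2 by (intro exI[of _ "F1 \<union> F2"]) auto
qed

lemma yhas_cinner: assumes "yhas_sum g S l"
  shows "((\<lambda>n. cinner (g n) y) has_sum cinner l y) S"
  unfolding has_sum_def tendsto_iff eventually_finite_subsets_at_top
proof (intro allI impI)
  fix e :: real assume e: "e > 0"
  define ny where "ny = ynorm y"
  have ny: "0 \<le> ny" by (simp add: ny_def)
  have e': "e / (ny + 1) > 0" using e ny by simp
  obtain F where F: "finite F" "F \<subseteq> S" "\<And>G. finite G \<Longrightarrow> F \<subseteq> G \<Longrightarrow> G \<subseteq> S \<Longrightarrow> ynorm (sum g G - l) < e / (ny + 1)"
    using assms e' unfolding yhas_sum_def by meson
  have "dist (\<Sum>n\<in>G. cinner (g n) y) (cinner l y) < e" if G: "finite G" "F \<subseteq> G" "G \<subseteq> S" for G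
  proof -
    have "(\<Sum>n\<in>G. cinner (g n) y) - cinner l y = cinner (sum g G - l) y"
      using hs.ip_sum_left[OF hs_Y, of G g y] hs.ip_diff_left[OF hs_Y, of "sum g G" l y] by simp
    hence "dist (\<Sum>n\<in>G. cinner (g n) y) (cinner l y) = cmod (cinner (sum g G - l) y)"
      by (simp add: dist_norm)
    also have "\<dots> \<le> ynorm (sum g G - l) * ny"
      using hs.cauchy_schwarz[OF hs_Y, of "sum g G - l" y] unfolding ynorm_def ny_def by simp
    also have "\<dots> \<le> e / (ny + 1) * ny"
      using F(3)[OF G] ny by (intro mult_right_mono) auto
    also have "\<dots> < e" using e ny by (simp add: field_simps)
    finally show ?thesis .
  qed
  thus "\<exists>X. finite X \<and> X \<subseteq> S \<and> (\<forall>Y. finite Y \<and> X \<subseteq> Y \<and> Y \<subseteq> S \<longrightarrow> dist (\<Sum>n\<in>Y. cinner (g n) y) (cinner l y) < e)"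
    using F by blast
qed

lemma arv_unique:
  fixes f :: "complex^'d::finite \<Rightarrow> 'y::chilbert"
  assumes c1: "arv_rep f c1" and c2: "arv_rep f c2"
  shows "c1 = c2"
proof
  fix n0
  define y where "y = c1 n0 - c2 n0"
  define a where "a n = cinner (c1 n - c2 n) y" for n
  have "a n = 0" for n
  proof (rule series_unique)
    fix lam :: "complex^'d" assume lam: "norm lam < 1"
    have "yhas_sum (\<lambda>n. mono_pow lam n *\<^sub>C c1 n - mono_pow lam n *\<^sub>C c2 n) UNIV 0"
      using c1 c2 lam unfolding arv_rep_def by (intro yhas_diff) auto
    from yhas_cinner[OF this, of y]
    show "((\<lambda>n. mono_pow lam n * a n) has_sum 0) UNIV"
      by (simp add: a_def scaleC_diff_right[symmetric] cinner_scaleC_left hs.ip_zero_left[OF hs_Y])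
  qed
  hence "cinner y y = 0" using a_def[of n0] y_def by simp
  hence "y = 0" by (rule cinner_eq_zero)
  thus "c1 n0 = c2 n0" by (simp add: y_def)
qed


context setting begin

lemma Qa_id: assumes x: "x \<in> M" shows "Qa M ipM (\<lambda>f. f 0) T x = x"
proof -
  have K: "{x\<in>M. obs M (\<lambda>f. f 0) T x = 0} = {0}" using obs_id by auto
  have OC: "orth_compl M ipM {0} = M" unfolding orth_compl_def by auto
  show ?thesis unfolding Qa_def K OC orth_proj_def
  proof (rule the_equality)
    show "x \<in> M \<and> (\<forall>s\<in>M. ipM (x - x) s = 0)" using x by simp
  next
    fix q assume q: "q \<in> M \<and> (\<forall>s\<in>M. ipM (x - q) s = 0)"
    hence "ipM (x - q) (x - q) = 0" using x by simp
    hence "x - q = 0" using ip_eq_zero[of "x - q"] x q by simp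
    thus "q = x" by simp
  qed
qed

lemma arv_norm_le: assumes f: "f \<in> M" shows "arv_norm f \<le> hnorm ipM f"
proof -
  have "(THE c. arv_rep f c) = coef f"
    by (rule the_equality) (use arv_rep_coef[OF f] arv_unique in blast)+
  hence "arv_norm f = sqrt (\<Sum>\<^sub>\<infinity>n. mfact_ratio n * (ynorm (coef f n))\<^sup>2)"
    unfolding arv_norm_def by simp
  also have "\<dots> \<le> sqrt ((hnorm ipM f)\<^sup>2)" using coef_summable(2)[OF f] by (rule real_sqrt_le_mono)
  also have "\<dots> = hnorm ipM f" using f by simp
  finally show ?thesis .
qed

end

theorem theorem3p21:
  fixes M :: "(complex^'d::finite \<Rightarrow> 'y::chilbert) set"
    and ipM :: "(complex^'d \<Rightarrow> 'y) \<Rightarrow> (complex^'d \<Rightarrow> 'y) \<Rightarrow> complex"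
    and T :: "'d \<Rightarrow> (complex^'d \<Rightarrow> 'y) \<Rightarrow> (complex^'d \<Rightarrow> 'y)"
  assumes hilb: "is_hilbert M ipM"
    and on_ball: "\<forall>f\<in>M. \<forall>lam. \<not> norm lam < 1 \<longrightarrow> f lam = 0"
    and T_bdd: "\<forall>j. is_blin M ipM M ipM (T j)"
    and T_shift: "\<forall>f\<in>M. \<forall>lam. norm lam < 1 \<longrightarrow>
                    f lam - f 0 = (\<Sum>j\<in>UNIV. (lam $ j) *\<^sub>C (T j f) lam)"
    and T_contr: "\<forall>f\<in>M. (\<Sum>j\<in>UNIV. (hnorm ipM (T j f))\<^sup>2) \<le> (hnorm ipM f)\<^sup>2 - (ynorm (f 0))\<^sup>2"
  shows "(\<exists>(X :: (complex^'d \<Rightarrow> 'y) set) ipX (C :: (complex^'d \<Rightarrow> 'y) \<Rightarrow> 'y) A.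
             is_hilbert X ipX \<and> is_blin X ipX UNIV cinner C
           \<and> (\<forall>j. is_blin X ipX X ipX (A j)) \<and> contractive_pair X ipX C A
           \<and> M = obs X C A ` X
           \<and> (\<forall>x\<in>X. hnorm ipM (obs X C A x) = hnorm ipX (Qa X ipX C A x)))
       \<and> M \<subseteq> arveson \<and> (\<forall>f\<in>M. arv_norm f \<le> hnorm ipM f)"
proof -
  interpret S: setting M ipM T
    using hilb on_ball T_bdd T_shift T_contr by (simp add: setting_def setting_axioms_def hs_def)
  have blinC: "is_blin M ipM UNIV cinner (\<lambda>f. f 0)"
    unfolding is_blin_def
  proof (intro conjI ballI allI)
    show "\<exists>K. \<forall>x\<in>M. hnorm cinner (x 0) \<le> K * hnorm ipM x"
      using S.f0_bound unfolding ynorm_def by (intro exI[of _ 1]) simp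
  qed simp_all
  have cp: "contractive_pair M ipM (\<lambda>f. f 0) T"
    unfolding contractive_pair_def using S.contr by simp
  have img: "M = obs M (\<lambda>f. f 0) T ` M"
    using S.obs_id by (auto simp: image_iff)
  have nm: "\<forall>x\<in>M. hnorm ipM (obs M (\<lambda>f. f 0) T x) = hnorm ipM (Qa M ipM (\<lambda>f. f 0) T x)"
    using S.obs_id S.Qa_id by simp
  have arv: "M \<subseteq> arveson" unfolding arveson_def using S.arv_rep_coef by blast
  show ?thesis
    using hilb blinC T_bdd cp img nm arv S.arv_norm_le by blast
qed


end
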